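(* Let $K$ be a field and $I\subset R=K[x_1,\ldots,x_n]$ a monomial ideal. Then: (i) for any ordered $n$-tuple $(i_1,\ldots,i_n)$ of positive integers, $I$ has the nearly copersistence property if and only if its expansion $I^*\subseteq R^*$ with respect to $(i_1,\ldots,i_n)$ has the nearly copersistence property; (ii) for any weight $W$ over $R$, $I$ has the nearly copersistence property if and only if the weighted ideal $I_W$ has the nearly copersistence property.
   Context: A monomial ideal $I$ in a polynomial ring $S$ over $K$ has the nearly copersistence property if there exist a positive integer $s$ and a monomial prime ideal $\mathfrak{p}$ of $S$ such that $\mathrm{Ass}_S(S/I^m)\cup\{\mathfrak{p}\}\supseteq\mathrm{Ass}_S(S/I^{m+1})$ for all $1\le m\le s$, and $\mathrm{Ass}_S(S/I^m)\supseteq\mathrm{Ass}_S(S/I^{m+1})$ for all $m\ge s+1$. Expansion: $R^*=K[x_{11},\ldots,x_{1i_1},\ldots,x_{n1},\ldots,x_{ni_n}]$ and $\mathfrak{p}_j=(x_{j1},\ldots,x_{ji_j})\subseteq R^*$; if $I$ has minimal monomial generators $x_1^{a_k(1)}\cdots x_n^{a_k(n)}$, $k=1,\ldots,m$, then $I^*=\sum_{k=1}^m\mathfrak{p}_1^{a_k(1)}\cdots\mathfrak{p}_n^{a_k(n)}$. Weighting: a weight is a function $W:\{x_1,\ldots,x_n\}\to\mathbb{N}$ (positive integers), $w_i=W(x_i)$; $I_W$ is generated by $h(u)$ for $u$ ranging over the minimal monomial generators of $I$, where $h:R\to R$ is the $K$-algebra homomorphism $h(x_i)=x_i^{w_i}$.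 *)

theory Defs
  imports "HOL-Library.Poly_Mapping"
begin

text \<open>Multivariate polynomials over a field 'k in variables of type 'v:
  a polynomial is a finitely supported map from exponent vectors (finitely supported
  maps 'v to nat) to coefficients; multiplication is the convolution product of
  HOL-Library.Poly_Mapping.\<close>

type_synonym ('v, 'k) mpoly = "('v \<Rightarrow>\<^sub>0 nat) \<Rightarrow>\<^sub>0 'k"

definition polys :: "'v set \<Rightarrow> ('v, 'k::field) mpoly set" where
  "polys V = {f :: ('v, 'k) mpoly. \<forall>a \<in> Poly_Mapping.keys f. Poly_Mapping.keys a \<subseteq> V}"

definition monom :: "('v \<Rightarrow>\<^sub>0 nat) \<Rightarrow> ('v, 'k::field) mpoly" where
  "monom a = Poly_Mapping.single a 1"

definition var :: "'v \<Rightarrow> ('v, 'k::field) mpoly" where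
  "var v = monom (Poly_Mapping.single v 1)"

definition is_ideal :: "'v set \<Rightarrow> ('v, 'k::field) mpoly set \<Rightarrow> bool" where
  "is_ideal V I \<longleftrightarrow> I \<subseteq> polys V \<and> 0 \<in> I \<and>
     (\<forall>f\<in>I. \<forall>g\<in>I. f + g \<in> I) \<and> (\<forall>f\<in>I. \<forall>r\<in>polys V. r * f \<in> I)"

definition ideal_gen :: "'v set \<Rightarrow> ('v, 'k::field) mpoly set \<Rightarrow> ('v, 'k) mpoly set" where
  "ideal_gen V G = \<Inter> {J. is_ideal V J \<and> G \<subseteq> J}"

definition ideal_prod :: "'v set \<Rightarrow> ('v, 'k::field) mpoly set \<Rightarrow> ('v, 'k) mpoly set \<Rightarrow> ('v, 'k) mpoly set" where
  "ideal_prod V I J = ideal_gen V {f * g | f g. f \<in> I \<and> g \<in> J}"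

fun ideal_pow :: "'v set \<Rightarrow> ('v, 'k::field) mpoly set \<Rightarrow> nat \<Rightarrow> ('v, 'k) mpoly set" where
  "ideal_pow V I 0 = polys V"
| "ideal_pow V I (Suc m) = ideal_prod V I (ideal_pow V I m)"

definition monomial_ideal :: "'v set \<Rightarrow> ('v, 'k::field) mpoly set \<Rightarrow> bool" where
  "monomial_ideal V I \<longleftrightarrow> is_ideal V I \<and>
     I = ideal_gen V {monom a | a. Poly_Mapping.keys a \<subseteq> V \<and> monom a \<in> I}"

definition prime_ideal :: "'v set \<Rightarrow> ('v, 'k::field) mpoly set \<Rightarrow> bool" where
  "prime_ideal V P \<longleftrightarrow> is_ideal V P \<and> P \<noteq> polys V \<and>
     (\<forall>f\<in>polys V. \<forall>g\<in>polys V. f * g \<in> P \<longrightarrow> f \<in> P \<or> g \<in> P)"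

definition Ass :: "'v set \<Rightarrow> ('v, 'k::field) mpoly set \<Rightarrow> ('v, 'k) mpoly set set" where
  "Ass V I = {P. prime_ideal V P \<and> (\<exists>f\<in>polys V. P = {g \<in> polys V. g * f \<in> I})}"

definition nearly_copersistent :: "'v set \<Rightarrow> ('v, 'k::field) mpoly set \<Rightarrow> bool" where
  "nearly_copersistent V I \<longleftrightarrow>
     (\<exists>s::nat. 0 < s \<and> (\<exists>p. prime_ideal V p \<and> monomial_ideal V p \<and>
        (\<forall>m. 1 \<le> m \<and> m \<le> s \<longrightarrow>
            Ass V (ideal_pow V I (Suc m)) \<subseteq> Ass V (ideal_pow V I m) \<union> {p}) \<and>
        (\<forall>m. s + 1 \<le> m \<longrightarrow> Ass V (ideal_pow V I (Suc m)) \<subseteq> Ass V (ideal_pow V I m))))"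

definition mingens :: "'v set \<Rightarrow> ('v, 'k::field) mpoly set \<Rightarrow> ('v \<Rightarrow>\<^sub>0 nat) set" where
  "mingens V I = {a. Poly_Mapping.keys a \<subseteq> V \<and> monom a \<in> I \<and>
     (\<forall>b. (\<forall>v. Poly_Mapping.lookup b v \<le> Poly_Mapping.lookup a v) \<and> b \<noteq> a \<longrightarrow> monom b \<notin> I)}"

text \<open>The base ring R = K[x_1,...,x_n] has variables 1..n.
  Expansion w.r.t. (i_1,...,i_n): R* has variables x_(j,k), 1 \<le> j \<le> n, 1 \<le> k \<le> i_j.\<close>
definition exp_vars :: "nat \<Rightarrow> (nat \<Rightarrow> nat) \<Rightarrow> (nat \<times> nat) set" where
  "exp_vars n i = {(j, k). j \<in> {1..n} \<and> k \<in> {1..i j}}"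

definition exp_prime :: "nat \<Rightarrow> (nat \<Rightarrow> nat) \<Rightarrow> nat \<Rightarrow> (nat \<times> nat, 'k::field) mpoly set" where
  "exp_prime n i j = ideal_gen (exp_vars n i) {var (j, k) | k. k \<in> {1..i j}}"

definition exp_term :: "nat \<Rightarrow> (nat \<Rightarrow> nat) \<Rightarrow> (nat \<Rightarrow>\<^sub>0 nat) \<Rightarrow> (nat \<times> nat, 'k::field) mpoly set" where
  "exp_term n i a = foldr (\<lambda>j J. ideal_prod (exp_vars n i)
       (ideal_pow (exp_vars n i) (exp_prime n i j) (Poly_Mapping.lookup a j)) J) [1..<Suc n] (polys (exp_vars n i))"

text \<open>I* = sum over minimal generators; a sum of ideals is the ideal generated by their union.\<close>
definition expansion :: "nat \<Rightarrow> (nat \<Rightarrow> nat) \<Rightarrow> (nat, 'k::field) mpoly set \<Rightarrow> (nat \<times> nat, 'k) mpoly set" where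
  "expansion n i I = ideal_gen (exp_vars n i) (\<Union>a \<in> mingens {1..n} I. exp_term n i a)"

definition weight_exp :: "(nat \<Rightarrow> nat) \<Rightarrow> (nat \<Rightarrow>\<^sub>0 nat) \<Rightarrow> (nat \<Rightarrow>\<^sub>0 nat)" where
  "weight_exp w a = (\<Sum>j \<in> Poly_Mapping.keys a. Poly_Mapping.single j (w j * Poly_Mapping.lookup a j))"

definition weighting :: "nat \<Rightarrow> (nat \<Rightarrow> nat) \<Rightarrow> (nat, 'k::field) mpoly set \<Rightarrow> (nat, 'k) mpoly set" where
  "weighting n w I = ideal_gen {1..n} {monom (weight_exp w a) | a. a \<in> mingens {1..n} I}"

end

theory Submission
  imports Defs "HOL-Library.Product_Lexorder"
begin

definition exps :: "'v set \<Rightarrow> ('v \<Rightarrow>\<^sub>0 nat) set" where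
  "exps V = {a. Poly_Mapping.keys a \<subseteq> V}"

definition MI :: "'v set \<Rightarrow> ('v \<Rightarrow>\<^sub>0 nat) set \<Rightarrow> ('v, 'k::field) mpoly set" where
  "MI V E = {f \<in> polys V. Poly_Mapping.keys f \<subseteq> E}"

definition upcl :: "'v set \<Rightarrow> ('v \<Rightarrow>\<^sub>0 nat) set \<Rightarrow> bool" where
  "upcl V E \<longleftrightarrow> E \<subseteq> exps V \<and> (\<forall>a\<in>E. \<forall>c\<in>exps V. a + c \<in> E)"

definition psum :: "('v \<Rightarrow>\<^sub>0 nat) set \<Rightarrow> ('v \<Rightarrow>\<^sub>0 nat) set \<Rightarrow> ('v \<Rightarrow>\<^sub>0 nat) set" where
  "psum E F = {e + f | e f. e \<in> E \<and> f \<in> F}"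

lemma exps_add: "a \<in> exps V \<Longrightarrow> b \<in> exps V \<Longrightarrow> a + b \<in> exps V"
  unfolding exps_def using keys_add[of a b] by auto

lemma exps_zero[simp]: "0 \<in> exps V"
  by (simp add: exps_def)

lemma polys_add: "f \<in> polys V \<Longrightarrow> g \<in> polys V \<Longrightarrow> f + g \<in> polys V"
  unfolding polys_def using keys_add[of f g] by blast

lemma polys_mult: "f \<in> polys V \<Longrightarrow> g \<in> polys V \<Longrightarrow> f * g \<in> polys V"
proof -
  assume f: "f \<in> polys V" and g: "g \<in> polys V"
  show ?thesis unfolding polys_def mem_Collect_eq
  proof (rule ballI)
    fix a assume "a \<in> Poly_Mapping.keys (f * g)"
    then obtain b c where "a = b + c" "b \<in> Poly_Mapping.keys f" "c \<in> Poly_Mapping.keys g"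
      using keys_mult by blast
    then show "Poly_Mapping.keys a \<subseteq> V" using f g keys_add[of b c] unfolding polys_def by blast
  qed
qed

lemma keys_monom[simp]: "Poly_Mapping.keys (monom a :: ('v,'k::field) mpoly) = {a}"
  by (simp add: monom_def)

lemma monom_polys[simp]: "(monom a :: ('v,'k::field) mpoly) \<in> polys V \<longleftrightarrow> a \<in> exps V"
  by (simp add: polys_def exps_def)

lemma single0_polys[simp]: "(Poly_Mapping.single 0 c :: ('v,'k::field) mpoly) \<in> polys V"
  by (simp add: polys_def)

lemma monom_mult: "(monom a :: ('v,'k::field) mpoly) * monom b = monom (a + b)"
  by (simp add: monom_def mult_single)

lemma single_as_monom: "(Poly_Mapping.single a c :: ('v,'k::field) mpoly) = Poly_Mapping.single 0 c * monom a"
  by (simp add: monom_def mult_single)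

lemma poly_decomp: "(f :: ('a \<Rightarrow>\<^sub>0 'b::comm_monoid_add)) = (\<Sum>a\<in>Poly_Mapping.keys f. Poly_Mapping.single a (Poly_Mapping.lookup f a))"
proof (rule poly_mapping_eqI)
  fix k
  show "Poly_Mapping.lookup f k = Poly_Mapping.lookup (\<Sum>a\<in>Poly_Mapping.keys f. Poly_Mapping.single a (Poly_Mapping.lookup f a)) k"
  proof (cases "k \<in> Poly_Mapping.keys f")
    case True
    then show ?thesis
      by (simp add: lookup_sum lookup_single when_def sum.delta)
  next
    case False
    then show ?thesis
      by (simp add: lookup_sum lookup_single when_def in_keys_iff)
  qed
qed

lemma ideal_polys: "is_ideal V J \<Longrightarrow> f \<in> J \<Longrightarrow> f \<in> polys V"
  unfolding is_ideal_def by blast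

lemma ideal_add: "is_ideal V J \<Longrightarrow> f \<in> J \<Longrightarrow> g \<in> J \<Longrightarrow> f + g \<in> J"
  unfolding is_ideal_def by blast

lemma ideal_mult: "is_ideal V J \<Longrightarrow> f \<in> J \<Longrightarrow> r \<in> polys V \<Longrightarrow> r * f \<in> J"
  unfolding is_ideal_def by blast

lemma ideal_mult2: "is_ideal V J \<Longrightarrow> f \<in> J \<Longrightarrow> r \<in> polys V \<Longrightarrow> f * r \<in> J"
  unfolding is_ideal_def by (metis mult.commute)

lemma ideal_zero: "is_ideal V J \<Longrightarrow> 0 \<in> J"
  unfolding is_ideal_def by blast

lemma ideal_uminus: "is_ideal V (J :: ('v,'k::field) mpoly set) \<Longrightarrow> f \<in> J \<Longrightarrow> - f \<in> J"
proof -
  assume "is_ideal V J" "f \<in> J"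
  then have "Poly_Mapping.single 0 (-1) * f \<in> J" by (intro ideal_mult) auto
  moreover have "Poly_Mapping.single 0 (-1::'k) = (-1 :: ('v,'k) mpoly)"
    by (simp add: single_uminus)
  ultimately show ?thesis by simp
qed

lemma ideal_diff: "is_ideal V (J :: ('v,'k::field) mpoly set) \<Longrightarrow> f \<in> J \<Longrightarrow> g \<in> J \<Longrightarrow> f - g \<in> J"
  using ideal_add[of V J f "- g"] ideal_uminus[of V J g] by simp

lemma ideal_sum:
  assumes J: "is_ideal V J"
  shows "finite S \<Longrightarrow> (\<forall>x\<in>S. h x \<in> J) \<Longrightarrow> sum h S \<in> J"
proof (induction S rule: finite_induct)
  case empty then show ?case using ideal_zero[OF J] by simp
next
  case (insert x F) then show ?case using ideal_add[OF J] by simp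
qed

lemma ideal_gen_least: "is_ideal V J \<Longrightarrow> S \<subseteq> J \<Longrightarrow> ideal_gen V S \<subseteq> J"
  unfolding ideal_gen_def by blast

lemma polys_zero[simp]: "0 \<in> polys V"
  by (simp add: polys_def)

lemma polys_ideal: "is_ideal V (polys V)"
  unfolding is_ideal_def by (simp add: polys_add polys_mult)

lemma ideal_gen_ideal:
  assumes S: "S \<subseteq> polys V" shows "is_ideal V (ideal_gen V S)"
proof -
  let ?F = "{J. is_ideal V J \<and> S \<subseteq> J}"
  have P: "polys V \<in> ?F" using polys_ideal S by blast
  have 1: "ideal_gen V S \<subseteq> polys V" unfolding ideal_gen_def using P by (rule Inter_lower)
  have 2: "0 \<in> ideal_gen V S" unfolding ideal_gen_def using ideal_zero by blast
  have 3: "f + g \<in> ideal_gen V S" if "f \<in> ideal_gen V S" "g \<in> ideal_gen V S" for f g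
    using that ideal_add unfolding ideal_gen_def by blast
  have 4: "r * f \<in> ideal_gen V S" if "f \<in> ideal_gen V S" "r \<in> polys V" for f r
    using that ideal_mult unfolding ideal_gen_def by blast
  show ?thesis unfolding is_ideal_def using 1 2 3 4 by blast
qed

lemma ideal_gen_sup: "S \<subseteq> ideal_gen V S"
  unfolding ideal_gen_def by blast

lemma MI_ideal:
  assumes u: "upcl V E" shows "is_ideal V (MI V E)"
proof -
  have 1: "MI V E \<subseteq> polys V" by (auto simp: MI_def)
  have 2: "0 \<in> MI V E" by (simp add: MI_def)
  have 3: "f + g \<in> MI V E" if f: "f \<in> MI V E" and g: "g \<in> MI V E" for f g
  proof -
    have "Poly_Mapping.keys (f + g) \<subseteq> E" using f g keys_add[of f g] unfolding MI_def by blast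
    moreover have "f + g \<in> polys V" using f g polys_add[of f V g] unfolding MI_def by blast
    ultimately show ?thesis unfolding MI_def by blast
  qed
  have 4: "r * f \<in> MI V E" if f: "f \<in> MI V E" and r: "r \<in> polys V" for f r
  proof -
    have "Poly_Mapping.keys (r * f) \<subseteq> E"
    proof
      fix a assume "a \<in> Poly_Mapping.keys (r * f)"
      then obtain b c where a: "a = b + c" and b: "b \<in> Poly_Mapping.keys r" and c: "c \<in> Poly_Mapping.keys f"
        using keys_mult[of r f] by blast
      have "c \<in> E" using c f unfolding MI_def by blast
      moreover have "b \<in> exps V" using b r unfolding polys_def exps_def by blast
      ultimately have "c + b \<in> E" using u unfolding upcl_def by blast
      then show "a \<in> E" using a by (simp add: add.commute)
    qed
    moreover have "r * f \<in> polys V" using f r polys_mult[of r V f] unfolding MI_def by blast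
    ultimately show ?thesis unfolding MI_def by blast
  qed
  show ?thesis unfolding is_ideal_def using 1 2 3 4 by blast
qed

lemma MI_least:
  assumes J: "is_ideal V (J :: ('v,'k::field) mpoly set)" and E: "\<forall>a\<in>E. monom a \<in> J"
  shows "MI V E \<subseteq> J"
proof
  fix f :: "('v,'k) mpoly" assume f: "f \<in> MI V E"
  have "\<forall>a\<in>Poly_Mapping.keys f. Poly_Mapping.single a (Poly_Mapping.lookup f a) \<in> J"
  proof
    fix a assume a: "a \<in> Poly_Mapping.keys f"
    then have "monom a \<in> J" using E f unfolding MI_def by blast
    moreover have "Poly_Mapping.single 0 (Poly_Mapping.lookup f a) \<in> polys V" by simp
    ultimately have "Poly_Mapping.single 0 (Poly_Mapping.lookup f a) * monom a \<in> J"
      using ideal_mult[OF J] by blast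
    then show "Poly_Mapping.single a (Poly_Mapping.lookup f a) \<in> J"
      using single_as_monom[of a "Poly_Mapping.lookup f a"] by simp
  qed
  then have "(\<Sum>a\<in>Poly_Mapping.keys f. Poly_Mapping.single a (Poly_Mapping.lookup f a)) \<in> J"
    by (rule ideal_sum[OF J finite_keys])
  then show "f \<in> J" by (simp only: poly_decomp[of f, symmetric])
qed

lemma monom_MI: "a \<in> exps V \<Longrightarrow> (monom a :: ('v,'k::field) mpoly) \<in> MI V E \<longleftrightarrow> a \<in> E"
  by (simp add: MI_def)

lemma gen_MI:
  assumes u: "upcl V E" and S: "S \<subseteq> (MI V E :: ('v,'k::field) mpoly set)"
    and M: "\<forall>a\<in>E. monom a \<in> ideal_gen V S"
  shows "ideal_gen V S = MI V E"
proof
  show "ideal_gen V S \<subseteq> MI V E" using ideal_gen_least[OF MI_ideal[OF u] S] .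
  have "S \<subseteq> polys V" using S by (auto simp: MI_def)
  then show "MI V E \<subseteq> ideal_gen V S" using MI_least[OF ideal_gen_ideal M] by blast
qed

lemma MI_exps: "MI V (exps V) = polys V"
  by (auto simp: MI_def polys_def exps_def)

lemma upcl_exps: "upcl V (exps V)"
  by (simp add: upcl_def exps_add)

lemma MI_mono: "E \<subseteq> F \<Longrightarrow> MI V E \<subseteq> MI V F"
  by (auto simp: MI_def)

lemma psum_upcl:
  assumes E: "upcl V E" and F: "upcl V F" shows "upcl V (psum E F)"
  unfolding upcl_def
proof (intro conjI ballI)
  show "psum E F \<subseteq> exps V"
  proof
    fix x assume "x \<in> psum E F"
    then obtain e f where "x = e + f" "e \<in> E" "f \<in> F" unfolding psum_def by blast
    then show "x \<in> exps V" using E F exps_add[of e V f] unfolding upcl_def by blast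
  qed
  fix x c assume x: "x \<in> psum E F" and c: "c \<in> exps V"
  then obtain e f where ef: "x = e + f" "e \<in> E" "f \<in> F" unfolding psum_def by blast
  then have "e + c \<in> E" using E c unfolding upcl_def by blast
  moreover have "x + c = (e + c) + f" using ef by (simp add: algebra_simps)
  ultimately show "x + c \<in> psum E F" using ef unfolding psum_def by blast
qed

lemma ideal_prod_MI:
  assumes E: "upcl V E" and F: "upcl V F"
  shows "ideal_prod V (MI V E) (MI V F :: ('v,'k::field) mpoly set) = MI V (psum E F)"
  unfolding ideal_prod_def
proof (rule gen_MI[OF psum_upcl[OF E F]])
  let ?S = "{f * g |f g. f \<in> (MI V E :: ('v,'k) mpoly set) \<and> g \<in> MI V F}"
  show "?S \<subseteq> MI V (psum E F)"
  proof
    fix x assume "x \<in> ?S"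
    then obtain f g where x: "x = f * g" and f: "f \<in> (MI V E :: ('v,'k) mpoly set)" and g: "g \<in> MI V F" by blast
    have "Poly_Mapping.keys x \<subseteq> psum E F"
    proof
      fix a assume "a \<in> Poly_Mapping.keys x"
      then obtain b c where "a = b + c" "b \<in> Poly_Mapping.keys f" "c \<in> Poly_Mapping.keys g"
        using keys_mult[of f g] x by blast
      moreover have "b \<in> E" "c \<in> F" using f g \<open>b \<in> _\<close> \<open>c \<in> _\<close> unfolding MI_def by blast+
      ultimately show "a \<in> psum E F" unfolding psum_def by blast
    qed
    moreover have "x \<in> polys V" using f g x polys_mult[of f V g] unfolding MI_def by blast
    ultimately show "x \<in> MI V (psum E F)" unfolding MI_def by blast
  qed
  show "\<forall>a\<in>psum E F. monom a \<in> ideal_gen V ?S"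
  proof
    fix a assume "a \<in> psum E F"
    then obtain e f where ef: "a = e + f" "e \<in> E" "f \<in> F" unfolding psum_def by blast
    have "e \<in> exps V" "f \<in> exps V" using ef E F unfolding upcl_def by blast+
    then have "(monom e :: ('v,'k) mpoly) \<in> MI V E" "(monom f :: ('v,'k) mpoly) \<in> MI V F"
      using ef by (simp_all add: monom_MI)
    then have "monom e * monom f \<in> ?S" by blast
    then have "monom a \<in> ?S" using ef by (simp add: monom_mult)
    then show "monom a \<in> ideal_gen V ?S" by (rule subsetD[OF ideal_gen_sup])
  qed
qed

fun powE :: "'v set \<Rightarrow> ('v \<Rightarrow>\<^sub>0 nat) set \<Rightarrow> nat \<Rightarrow> ('v \<Rightarrow>\<^sub>0 nat) set" where
  "powE V E 0 = exps V"
| "powE V E (Suc m) = psum E (powE V E m)"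

lemma powE_upcl: "upcl V E \<Longrightarrow> upcl V (powE V E m)"
  by (induction m) (simp_all add: upcl_exps psum_upcl)

lemma ideal_pow_MI:
  assumes E: "upcl V E"
  shows "ideal_pow V (MI V E :: ('v,'k::field) mpoly set) m = MI V (powE V E m)"
proof (induction m)
  case 0 then show ?case by (simp add: MI_exps)
next
  case (Suc m) then show ?case using ideal_prod_MI[OF E powE_upcl[OF E]] by simp
qed

section \<open>Monomial ideals\<close>

definition expI :: "'v set \<Rightarrow> ('v, 'k::field) mpoly set \<Rightarrow> ('v \<Rightarrow>\<^sub>0 nat) set" where
  "expI V I = {a \<in> exps V. monom a \<in> I}"

lemma monomial_MI:
  assumes m: "monomial_ideal V (I :: ('v,'k::field) mpoly set)"
  shows "upcl V (expI V I) \<and> I = MI V (expI V I)"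
proof -
  have J: "is_ideal V I" using m unfolding monomial_ideal_def by blast
  have u: "upcl V (expI V I)" unfolding upcl_def
  proof (intro conjI ballI)
    show "expI V I \<subseteq> exps V" unfolding expI_def by blast
    fix a c assume a: "a \<in> expI V I" and c: "c \<in> exps V"
    have "monom c * monom a \<in> I" using a c ideal_mult[OF J, of "monom a" "monom c"] unfolding expI_def by simp
    then have "monom (a + c) \<in> I" by (simp add: monom_mult add.commute)
    then show "a + c \<in> expI V I" using a c exps_add[of a V c] unfolding expI_def by blast
  qed
  let ?S = "{(monom a :: ('v,'k) mpoly) | a. Poly_Mapping.keys a \<subseteq> V \<and> (monom a :: ('v,'k) mpoly) \<in> I}"
  have eq2: "ideal_gen V ?S = MI V (expI V I)"
  proof (rule gen_MI[OF u])
    show "?S \<subseteq> MI V (expI V I)" unfolding MI_def expI_def exps_def polys_def by auto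
    show "\<forall>a\<in>expI V I. monom a \<in> ideal_gen V ?S"
    proof
      fix a assume "a \<in> expI V I"
      then have "monom a \<in> ?S" unfolding expI_def exps_def by blast
      then show "monom a \<in> ideal_gen V ?S" by (rule subsetD[OF ideal_gen_sup])
    qed
  qed
  have eq1: "I = ideal_gen V ?S" using m unfolding monomial_ideal_def by blast
  show ?thesis using u trans[OF eq1 eq2] by blast
qed

lemma MI_monomial:
  assumes u: "upcl V E" shows "monomial_ideal V (MI V E :: ('v,'k::field) mpoly set)"
proof -
  let ?S = "{(monom a :: ('v,'k) mpoly) | a. Poly_Mapping.keys a \<subseteq> V \<and> (monom a :: ('v,'k) mpoly) \<in> MI V E}"
  have "ideal_gen V ?S = MI V E"
  proof (rule gen_MI[OF u])
    show "?S \<subseteq> MI V E"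
    proof
      fix x assume "x \<in> ?S"
      then obtain a where "x = monom a" "monom a \<in> (MI V E :: ('v,'k) mpoly set)" by blast
      then show "x \<in> MI V E" by simp
    qed
    show "\<forall>a\<in>E. monom a \<in> ideal_gen V ?S"
    proof
      fix a assume a: "a \<in> E"
      then have "a \<in> exps V" using u unfolding upcl_def by blast
      then have "monom a \<in> ?S" using a unfolding MI_def exps_def polys_def by auto
      then show "monom a \<in> ideal_gen V ?S" by (rule subsetD[OF ideal_gen_sup])
    qed
  qed
  then show ?thesis unfolding monomial_ideal_def using MI_ideal[OF u] by simp
qed

definition dg :: "('v \<Rightarrow>\<^sub>0 nat) \<Rightarrow> nat" where
  "dg a = (\<Sum>v\<in>Poly_Mapping.keys a. Poly_Mapping.lookup a v)"

lemma keys_le: "(\<forall>v. Poly_Mapping.lookup (b :: 'v \<Rightarrow>\<^sub>0 nat) v \<le> Poly_Mapping.lookup a v) \<Longrightarrow> Poly_Mapping.keys b \<subseteq> Poly_Mapping.keys a"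
proof
  fix x assume le: "\<forall>v. Poly_Mapping.lookup b v \<le> Poly_Mapping.lookup a v" and x: "x \<in> Poly_Mapping.keys b"
  then have "Poly_Mapping.lookup b x \<noteq> 0" by (simp add: in_keys_iff)
  moreover have "Poly_Mapping.lookup b x \<le> Poly_Mapping.lookup a x" using le by blast
  ultimately have "Poly_Mapping.lookup a x \<noteq> 0" by linarith
  then show "x \<in> Poly_Mapping.keys a" by (simp add: in_keys_iff)
qed

lemma dg_less:
  assumes le: "\<forall>v. Poly_Mapping.lookup b v \<le> Poly_Mapping.lookup a v" and ne: "b \<noteq> a"
  shows "dg b < dg a"
proof -
  have kb: "Poly_Mapping.keys b \<subseteq> Poly_Mapping.keys a" using keys_le[OF le] .
  have "dg b = (\<Sum>v\<in>Poly_Mapping.keys a. Poly_Mapping.lookup b v)"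
    unfolding dg_def by (rule sum.mono_neutral_left) (auto simp: kb in_keys_iff)
  also have "\<dots> < (\<Sum>v\<in>Poly_Mapping.keys a. Poly_Mapping.lookup a v)"
  proof (rule sum_strict_mono_ex1)
    show "finite (Poly_Mapping.keys a)" by simp
    show "\<forall>x\<in>Poly_Mapping.keys a. Poly_Mapping.lookup b x \<le> Poly_Mapping.lookup a x" using le by blast
    obtain v where v: "Poly_Mapping.lookup b v \<noteq> Poly_Mapping.lookup a v"
      using ne by (auto simp: poly_mapping_eq_iff fun_eq_iff)
    then have "Poly_Mapping.lookup b v < Poly_Mapping.lookup a v" using le le_neq_implies_less by blast
    moreover then have "v \<in> Poly_Mapping.keys a" by (simp add: in_keys_iff)
    ultimately show "\<exists>x\<in>Poly_Mapping.keys a. Poly_Mapping.lookup b x < Poly_Mapping.lookup a x" by blast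
  qed
  finally show ?thesis unfolding dg_def .
qed

lemma mingens_below:
  assumes m: "monomial_ideal V (I :: ('v,'k::field) mpoly set)"
  shows "a \<in> expI V I \<Longrightarrow> \<exists>g\<in>mingens V I. \<forall>v. Poly_Mapping.lookup g v \<le> Poly_Mapping.lookup a v"
proof (induction "dg a" arbitrary: a rule: less_induct)
  case less
  show ?case
  proof (cases "a \<in> mingens V I")
    case True then show ?thesis by blast
  next
    case False
    then obtain b where b: "\<forall>v. Poly_Mapping.lookup b v \<le> Poly_Mapping.lookup a v" "b \<noteq> a" "monom b \<in> I"
      using less.prems unfolding mingens_def expI_def exps_def by blast
    have "b \<in> expI V I" using b keys_le[OF b(1)] less.prems unfolding expI_def exps_def by blast
    then obtain g where "g \<in> mingens V I" "\<forall>v. Poly_Mapping.lookup g v \<le> Poly_Mapping.lookup b v"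
      using less.hyps[OF dg_less[OF b(1) b(2)]] by blast
    then show ?thesis using b(1) order_trans by blast
  qed
qed

lemma mingens_expI: "mingens V I \<subseteq> expI V I"
  unfolding mingens_def expI_def exps_def by blast

lemma lookup_mult_unique:
  fixes g h :: "('v, 'k::field) mpoly"
  assumes t: "t \<in> Poly_Mapping.keys g" and s: "s \<in> Poly_Mapping.keys h"
    and uniq: "\<forall>a\<in>Poly_Mapping.keys g. \<forall>b\<in>Poly_Mapping.keys h. a + b = t + s \<longrightarrow> a = t \<and> b = s"
  shows "Poly_Mapping.lookup (g * h) (t + s) = Poly_Mapping.lookup g t * Poly_Mapping.lookup h s"
proof -
  have "g * h = (\<Sum>a\<in>Poly_Mapping.keys g. Poly_Mapping.single a (Poly_Mapping.lookup g a)) *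
      (\<Sum>b\<in>Poly_Mapping.keys h. Poly_Mapping.single b (Poly_Mapping.lookup h b))"
    by (simp only: poly_decomp[symmetric])
  also have "\<dots> = (\<Sum>a\<in>Poly_Mapping.keys g. \<Sum>b\<in>Poly_Mapping.keys h.
      Poly_Mapping.single (a + b) (Poly_Mapping.lookup g a * Poly_Mapping.lookup h b))"
    by (simp only: sum_product mult_single)
  finally have eq: "Poly_Mapping.lookup (g * h) (t + s) = (\<Sum>a\<in>Poly_Mapping.keys g. \<Sum>b\<in>Poly_Mapping.keys h.
      (Poly_Mapping.lookup g a * Poly_Mapping.lookup h b when a + b = t + s))"
    by (simp add: lookup_sum lookup_single)
  have inner: "(\<Sum>b\<in>Poly_Mapping.keys h. (Poly_Mapping.lookup g a * Poly_Mapping.lookup h b when a + b = t + s))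
      = (if a = t then Poly_Mapping.lookup g t * Poly_Mapping.lookup h s else 0)"
    if a: "a \<in> Poly_Mapping.keys g" for a
  proof (cases "a = t")
    case True
    have "(\<Sum>b\<in>Poly_Mapping.keys h. (Poly_Mapping.lookup g a * Poly_Mapping.lookup h b when a + b = t + s))
        = (\<Sum>b\<in>Poly_Mapping.keys h. (if s = b then Poly_Mapping.lookup g t * Poly_Mapping.lookup h b else 0))"
      using True by (intro sum.cong) (auto simp: when_def)
    also have "\<dots> = Poly_Mapping.lookup g t * Poly_Mapping.lookup h s" using s by simp
    finally show ?thesis using True by simp
  next
    case False
    have "(\<Sum>b\<in>Poly_Mapping.keys h. (Poly_Mapping.lookup g a * Poly_Mapping.lookup h b when a + b = t + s)) = 0"
    proof (rule sum.neutral, rule ballI)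
      fix b assume b: "b \<in> Poly_Mapping.keys h"
      have "a + b \<noteq> t + s" using uniq a b False by blast
      then show "(Poly_Mapping.lookup g a * Poly_Mapping.lookup h b when a + b = t + s) = 0" by simp
    qed
    then show ?thesis using False by simp
  qed
  have "Poly_Mapping.lookup (g * h) (t + s) = (\<Sum>a\<in>Poly_Mapping.keys g.
      (if t = a then Poly_Mapping.lookup g t * Poly_Mapping.lookup h s else 0))"
    unfolding eq by (rule sum.cong) (auto simp: inner)
  also have "\<dots> = Poly_Mapping.lookup g t * Poly_Mapping.lookup h s" using t by simp
  finally show ?thesis .
qed

lemma lookup_mult_max:
  fixes g h :: "('v::linorder, 'k::field) mpoly"
  assumes g: "g \<noteq> 0" and h: "h \<noteq> 0"
  shows "Poly_Mapping.lookup (g * h) (Max (Poly_Mapping.keys g) + Max (Poly_Mapping.keys h))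
     = Poly_Mapping.lookup g (Max (Poly_Mapping.keys g)) * Poly_Mapping.lookup h (Max (Poly_Mapping.keys h))"
proof (rule lookup_mult_unique)
  let ?t = "Max (Poly_Mapping.keys g)" and ?s = "Max (Poly_Mapping.keys h)"
  show t: "?t \<in> Poly_Mapping.keys g" using g by (intro Max_in) auto
  show s: "?s \<in> Poly_Mapping.keys h" using h by (intro Max_in) auto
  show "\<forall>a\<in>Poly_Mapping.keys g. \<forall>b\<in>Poly_Mapping.keys h. a + b = ?t + ?s \<longrightarrow> a = ?t \<and> b = ?s"
  proof (intro ballI impI)
    fix a b assume a: "a \<in> Poly_Mapping.keys g" and b: "b \<in> Poly_Mapping.keys h" and e: "a + b = ?t + ?s"
    have at: "a \<le> ?t" using a by simp
    have bs: "b \<le> ?s" using b by simp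
    have "a = ?t"
    proof (rule ccontr)
      assume "a \<noteq> ?t"
      then have "a < ?t" using at by simp
      then have "a + b < ?t + b" by (rule add_strict_right_mono)
      also have "\<dots> \<le> ?t + ?s" using bs by (rule add_left_mono)
      finally show False using e by simp
    qed
    moreover then have "b = ?s" using e by simp
    ultimately show "a = ?t \<and> b = ?s" by blast
  qed
qed

lemma monom_mult_eq:
  "(monom b :: ('v,'k::field) mpoly) * f = (\<Sum>a\<in>Poly_Mapping.keys f. Poly_Mapping.single (b + a) (Poly_Mapping.lookup f a))"
proof -
  have "(monom b :: ('v,'k) mpoly) * f = monom b * (\<Sum>a\<in>Poly_Mapping.keys f. Poly_Mapping.single a (Poly_Mapping.lookup f a))"
    by (simp only: poly_decomp[symmetric])
  also have "\<dots> = (\<Sum>a\<in>Poly_Mapping.keys f. Poly_Mapping.single (b + a) (Poly_Mapping.lookup f a))"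
    by (simp add: sum_distrib_left monom_def mult_single)
  finally show ?thesis .
qed

lemma lookup_monom_mult:
  "Poly_Mapping.lookup ((monom b :: ('v,'k::field) mpoly) * f) (b + a) = Poly_Mapping.lookup f a"
proof -
  have "Poly_Mapping.lookup ((monom b :: ('v,'k) mpoly) * f) (b + a) =
      (\<Sum>x\<in>Poly_Mapping.keys f. (if a = x then Poly_Mapping.lookup f x else 0))"
    unfolding monom_mult_eq lookup_sum lookup_single by (intro sum.cong) (auto simp: when_def)
  also have "\<dots> = Poly_Mapping.lookup f a" by (simp add: in_keys_iff)
  finally show ?thesis .
qed

lemma keys_monom_mult:
  "Poly_Mapping.keys ((monom b :: ('v,'k::field) mpoly) * f) = (\<lambda>a. b + a) ` Poly_Mapping.keys f"
proof
  show "Poly_Mapping.keys (monom b * f) \<subseteq> (\<lambda>a. b + a) ` Poly_Mapping.keys f"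
  proof
    fix x assume "x \<in> Poly_Mapping.keys ((monom b :: ('v,'k) mpoly) * f)"
    then obtain c a where "x = c + a" "c \<in> Poly_Mapping.keys (monom b :: ('v,'k) mpoly)" "a \<in> Poly_Mapping.keys f"
      using keys_mult[of "monom b :: ('v,'k) mpoly" f] by blast
    then show "x \<in> (\<lambda>a. b + a) ` Poly_Mapping.keys f" by simp
  qed
  show "(\<lambda>a. b + a) ` Poly_Mapping.keys f \<subseteq> Poly_Mapping.keys ((monom b :: ('v,'k) mpoly) * f)"
    by (auto simp: in_keys_iff lookup_monom_mult)
qed

lemma monom_mult_MI:
  assumes b: "b \<in> exps V" and f: "f \<in> polys V"
  shows "(monom b :: ('v,'k::field) mpoly) * f \<in> MI V E \<longleftrightarrow> (\<forall>a\<in>Poly_Mapping.keys f. b + a \<in> E)"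
proof -
  have "(monom b :: ('v,'k) mpoly) * f \<in> polys V" using b f polys_mult[of "monom b" V f] by simp
  then show ?thesis unfolding MI_def by (auto simp: keys_monom_mult)
qed

lemma one_polys[simp]: "(1 :: ('v,'k::field) mpoly) \<in> polys V"
  by (simp add: polys_def)

lemma polys_pow: "x \<in> polys V \<Longrightarrow> x ^ r \<in> polys V"
  by (induction r) (simp_all add: polys_mult)

lemma polys_uminus: "x \<in> polys V \<Longrightarrow> - (x :: ('v,'k::field) mpoly) \<in> polys V"
  by (simp add: polys_def)

lemma polys_diff: "x \<in> polys V \<Longrightarrow> y \<in> polys V \<Longrightarrow> (x :: ('v,'k::field) mpoly) - y \<in> polys V"
  using polys_add[of x V "- y"] polys_uminus[of y V] by simp

lemma prime_ideal_ideal: "prime_ideal V P \<Longrightarrow> is_ideal V P"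
  unfolding prime_ideal_def by blast

lemma prime_one:
  assumes P: "prime_ideal V (P :: ('v,'k::field) mpoly set)" shows "1 \<notin> P"
proof
  assume one: "1 \<in> P"
  have "polys V \<subseteq> P"
  proof
    fix q :: "('v,'k) mpoly" assume "q \<in> polys V"
    then have "q * 1 \<in> P" using ideal_mult[OF prime_ideal_ideal[OF P] one] by (simp add: mult.commute)
    then show "q \<in> P" by simp
  qed
  moreover have "P \<subseteq> polys V" using prime_ideal_ideal[OF P] unfolding is_ideal_def by blast
  ultimately show False using P unfolding prime_ideal_def by blast
qed

lemma prime_pow:
  assumes P: "prime_ideal V (P :: ('v,'k::field) mpoly set)" and x: "x \<in> polys V"
  shows "x ^ r \<in> P \<Longrightarrow> x \<in> P"
proof (induction r)
  case 0 then show ?case using prime_one[OF P] by simp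
next
  case (Suc r)
  have "x * x ^ r \<in> P" using Suc.prems by simp
  moreover have "x ^ r \<in> polys V" using polys_pow[OF x] .
  ultimately have "x \<in> P \<or> x ^ r \<in> P" using P x unfolding prime_ideal_def by blast
  then show ?case using Suc.IH by blast
qed

section \<open>Associated primes are monomial\<close>

lemma single_polys: "a \<in> exps V \<Longrightarrow> (Poly_Mapping.single a c :: ('v,'k::field) mpoly) \<in> polys V"
  by (simp add: polys_def exps_def)

lemma keys_remove:
  fixes h :: "('v, 'k::field) mpoly"
  assumes "Poly_Mapping.lookup h x = c"
  shows "Poly_Mapping.keys (h - Poly_Mapping.single x c) = Poly_Mapping.keys h - {x}"
  using assms by (auto simp: in_keys_iff lookup_minus lookup_single when_def split: if_splits)

lemma colon_claim:
  fixes g :: "('v::linorder, 'k::field) mpoly"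
  assumes u: "upcl V E" and g: "g \<in> polys V" "g \<noteq> 0"
  shows "\<forall>h\<in>polys V. card (Poly_Mapping.keys h) = k \<longrightarrow> g * h \<in> MI V E \<longrightarrow>
           monom (Max (Poly_Mapping.keys g)) ^ k * h \<in> MI V E"
proof (induction k)
  case 0
  show ?case
  proof (intro ballI impI)
    fix h :: "('v,'k) mpoly" assume "card (Poly_Mapping.keys h) = 0"
    then have "h = 0" by simp
    then show "monom (Max (Poly_Mapping.keys g)) ^ 0 * h \<in> MI V E" by (simp add: MI_def)
  qed
next
  case (Suc k)
  have J: "is_ideal V (MI V E :: ('v,'k) mpoly set)" by (rule MI_ideal[OF u])
  let ?t = "Max (Poly_Mapping.keys g)"
  have tk: "?t \<in> Poly_Mapping.keys g" using g by (intro Max_in) auto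
  have texp: "?t \<in> exps V" using tk g unfolding polys_def exps_def by blast
  show ?case
  proof (intro ballI impI)
    fix h :: "('v,'k) mpoly"
    assume h: "h \<in> polys V" and ch: "card (Poly_Mapping.keys h) = Suc k" and gh: "g * h \<in> MI V E"
    have h0: "h \<noteq> 0" using ch by auto
    let ?s = "Max (Poly_Mapping.keys h)"
    have sk: "?s \<in> Poly_Mapping.keys h" using h0 by (intro Max_in) auto
    let ?c = "Poly_Mapping.lookup h ?s"
    have "Poly_Mapping.lookup (g * h) (?t + ?s) \<noteq> 0"
      unfolding lookup_mult_max[OF g(2) h0] using tk sk by (simp add: in_keys_iff)
    then have tsE: "?t + ?s \<in> E" using gh unfolding MI_def by (auto simp: in_keys_iff)
    have tsexp: "?t + ?s \<in> exps V" using texp sk h exps_add[of ?t V ?s] unfolding polys_def exps_def by blast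
    define h' where "h' = monom ?t * h - Poly_Mapping.single (?t + ?s) ?c"
    have kh': "Poly_Mapping.keys h' = Poly_Mapping.keys (monom ?t * h) - {?t + ?s}"
      unfolding h'_def by (rule keys_remove) (simp add: lookup_monom_mult)
    have "card (Poly_Mapping.keys (monom ?t * h)) = Suc k"
      unfolding keys_monom_mult using ch by (simp add: card_image inj_on_def)
    moreover have "?t + ?s \<in> Poly_Mapping.keys (monom ?t * h)"
      unfolding keys_monom_mult using sk by blast
    ultimately have ch': "card (Poly_Mapping.keys h') = k" unfolding kh' by simp
    have h'p: "h' \<in> polys V" unfolding h'_def
      using polys_diff[OF polys_mult[OF iffD2[OF monom_polys texp] h] single_polys[OF tsexp]] .
    have m1: "monom ?t * (g * h) \<in> MI V E" using ideal_mult[OF J gh] texp by simp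
    have mts: "monom (?t + ?s) \<in> (MI V E :: ('v,'k) mpoly set)" using tsE tsexp by (simp add: monom_MI)
    have m2: "(Poly_Mapping.single 0 ?c * g) * monom (?t + ?s) \<in> MI V E"
      by (rule ideal_mult[OF J mts polys_mult[OF single0_polys g(1)]])
    have "g * h' = monom ?t * (g * h) - (Poly_Mapping.single 0 ?c * g) * monom (?t + ?s)"
      unfolding h'_def single_as_monom[of "?t + ?s" ?c] by (simp add: algebra_simps)
    then have gh': "g * h' \<in> MI V E" using ideal_diff[OF J m1 m2] by simp
    have IH: "monom ?t ^ k * h' \<in> MI V E" using Suc.IH h'p ch' gh' by blast
    have m3: "(monom ?t ^ k * Poly_Mapping.single 0 ?c) * monom (?t + ?s) \<in> MI V E"
      by (rule ideal_mult[OF J mts polys_mult[OF polys_pow[OF iffD2[OF monom_polys texp]] single0_polys]])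
    have "monom ?t ^ Suc k * h = monom ?t ^ k * h' + (monom ?t ^ k * Poly_Mapping.single 0 ?c) * monom (?t + ?s)"
      unfolding h'_def single_as_monom[of "?t + ?s" ?c] by (simp add: algebra_simps)
    then show "monom ?t ^ Suc k * h \<in> MI V E" using ideal_add[OF J IH m3] by simp
  qed
qed

lemma Ass_monomials:
  fixes f :: "('v::linorder, 'k::field) mpoly"
  assumes u: "upcl V E" and f: "f \<in> polys V"
    and Pdef: "P = {g \<in> polys V. g * f \<in> MI V E}" and pr: "prime_ideal V P"
  shows "g \<in> P \<Longrightarrow> t \<in> Poly_Mapping.keys g \<Longrightarrow> monom t \<in> P"
proof (induction "card (Poly_Mapping.keys g)" arbitrary: g rule: less_induct)
  case less
  have JP: "is_ideal V P" using prime_ideal_ideal[OF pr] .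
  have gp: "g \<in> polys V" "g * f \<in> MI V E" using less.prems Pdef by auto
  have g0: "g \<noteq> 0" using less.prems by auto
  let ?t = "Max (Poly_Mapping.keys g)"
  have tk: "?t \<in> Poly_Mapping.keys g" using g0 by (intro Max_in) auto
  have texp: "?t \<in> exps V" using tk gp unfolding polys_def exps_def by blast
  have "monom ?t ^ card (Poly_Mapping.keys f) * f \<in> MI V E"
    using colon_claim[OF u gp(1) g0, of "card (Poly_Mapping.keys f)"] f gp(2) by blast
  moreover have "monom ?t ^ card (Poly_Mapping.keys f) \<in> polys V" by (rule polys_pow[OF iffD2[OF monom_polys texp]])
  ultimately have "monom ?t ^ card (Poly_Mapping.keys f) \<in> P" using Pdef by blast
  then have mt: "monom ?t \<in> P" using prime_pow[OF pr] texp by simp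
  show ?case
  proof (cases "t = ?t")
    case True then show ?thesis using mt by simp
  next
    case False
    define g' where "g' = g - Poly_Mapping.single ?t (Poly_Mapping.lookup g ?t)"
    have kg': "Poly_Mapping.keys g' = Poly_Mapping.keys g - {?t}" unfolding g'_def by (rule keys_remove) simp
    have "Poly_Mapping.single 0 (Poly_Mapping.lookup g ?t) * monom ?t \<in> P"
      using ideal_mult[OF JP mt] by simp
    then have "g' \<in> P" unfolding g'_def single_as_monom[of ?t] using ideal_diff[OF JP less.prems(1)] by blast
    moreover have "card (Poly_Mapping.keys g') < card (Poly_Mapping.keys g)"
    proof -
      have "card (Poly_Mapping.keys g) > 0" using tk card_gt_0_iff by fastforce
      then show ?thesis unfolding kg' using tk by simp
    qed
    moreover have "t \<in> Poly_Mapping.keys g'" using kg' less.prems(2) False by blast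
    ultimately show ?thesis using less.hyps by blast
  qed
qed

section \<open>Monomial primes\<close>

definition PE :: "'v set \<Rightarrow> 'v set \<Rightarrow> ('v \<Rightarrow>\<^sub>0 nat) set" where
  "PE V A = {b \<in> exps V. \<exists>j\<in>A. 0 < Poly_Mapping.lookup b j}"

definition PA :: "'v set \<Rightarrow> 'v set \<Rightarrow> ('v, 'k::field) mpoly set" where
  "PA V A = MI V (PE V A)"

definition assp :: "'v set \<Rightarrow> ('v \<Rightarrow>\<^sub>0 nat) set \<Rightarrow> 'v set \<Rightarrow> bool" where
  "assp V E A \<longleftrightarrow> A \<subseteq> V \<and> (\<exists>c\<in>exps V. \<forall>b\<in>exps V. (c + b \<in> E \<longleftrightarrow> (\<exists>j\<in>A. 0 < Poly_Mapping.lookup b j)))"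

lemma PE_upcl: "upcl V (PE V A)"
  unfolding upcl_def PE_def by (auto simp: exps_add lookup_add intro: add_pos_nonneg)

lemma sum_eq_max:
  fixes a t b s :: "'a::linordered_cancel_ab_semigroup_add"
  assumes "a \<le> t" "b \<le> s" "a + b = t + s"
  shows "a = t \<and> b = s"
proof -
  have "a = t"
  proof (rule ccontr)
    assume "a \<noteq> t"
    then have "a < t" using assms(1) by simp
    then have "a + b < t + b" by (rule add_strict_right_mono)
    also have "\<dots> \<le> t + s" using assms(2) by (rule add_left_mono)
    finally show False using assms(3) by simp
  qed
  then show ?thesis using assms(3) by simp
qed

lemma PA_prime: "prime_ideal V (PA V A :: ('v::linorder, 'k::field) mpoly set)"
  unfolding prime_ideal_def
proof (intro conjI ballI impI)
  show "is_ideal V (PA V A :: ('v, 'k) mpoly set)" unfolding PA_def by (rule MI_ideal[OF PE_upcl])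
  have "(1 :: ('v,'k) mpoly) \<notin> PA V A" unfolding PA_def MI_def PE_def by simp
  then show "PA V A \<noteq> (polys V :: ('v, 'k) mpoly set)" using one_polys by metis
  fix f g :: "('v,'k) mpoly" assume f: "f \<in> polys V" and g: "g \<in> polys V" and fg: "f * g \<in> PA V A"
  show "f \<in> PA V A \<or> g \<in> PA V A"
  proof (rule ccontr)
    assume "\<not> (f \<in> PA V A \<or> g \<in> PA V A)"
    then have nf: "Poly_Mapping.keys f - PE V A \<noteq> {}" and ng: "Poly_Mapping.keys g - PE V A \<noteq> {}"
      using f g unfolding PA_def MI_def by auto
    let ?Kf = "Poly_Mapping.keys f - PE V A" and ?Kg = "Poly_Mapping.keys g - PE V A"
    let ?t = "Max ?Kf" and ?s = "Max ?Kg"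
    have t: "?t \<in> ?Kf" using nf by (intro Max_in) auto
    have s: "?s \<in> ?Kg" using ng by (intro Max_in) auto
    have texp: "?t \<in> exps V" using t f unfolding polys_def exps_def by blast
    have sexp: "?s \<in> exps V" using s g unfolding polys_def exps_def by blast
    have t0: "\<forall>j\<in>A. Poly_Mapping.lookup ?t j = 0" using t texp unfolding PE_def by auto
    have s0: "\<forall>j\<in>A. Poly_Mapping.lookup ?s j = 0" using s sexp unfolding PE_def by auto
    have "Poly_Mapping.lookup (f * g) (?t + ?s) = Poly_Mapping.lookup f ?t * Poly_Mapping.lookup g ?s"
    proof (rule lookup_mult_unique)
      show "?t \<in> Poly_Mapping.keys f" using t by blast
      show "?s \<in> Poly_Mapping.keys g" using s by blast
      show "\<forall>a\<in>Poly_Mapping.keys f. \<forall>b\<in>Poly_Mapping.keys g. a + b = ?t + ?s \<longrightarrow> a = ?t \<and> b = ?s"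
      proof (intro ballI impI)
        fix a b assume a: "a \<in> Poly_Mapping.keys f" and b: "b \<in> Poly_Mapping.keys g" and e: "a + b = ?t + ?s"
        have "\<forall>j\<in>A. Poly_Mapping.lookup a j + Poly_Mapping.lookup b j = 0"
          using t0 s0 arg_cong[OF e, of "\<lambda>x. Poly_Mapping.lookup x _"] by (simp add: lookup_add)
        then have "a \<notin> PE V A" "b \<notin> PE V A" unfolding PE_def by auto
        then have "a \<in> ?Kf" "b \<in> ?Kg" using a b by auto
        then have "a \<le> ?t" "b \<le> ?s" by simp_all
        then show "a = ?t \<and> b = ?s" using sum_eq_max e by blast
      qed
    qed
    then have "?t + ?s \<in> Poly_Mapping.keys (f * g)" using t s by (simp add: in_keys_iff)
    then have "?t + ?s \<in> PE V A" using fg unfolding PA_def MI_def by blast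
    then show False using t0 s0 unfolding PE_def by (auto simp: lookup_add)
  qed
qed

lemma PA_monomial: "monomial_ideal V (PA V A :: ('v, 'k::field) mpoly set)"
  unfolding PA_def by (rule MI_monomial[OF PE_upcl])

lemma var_exps: "j \<in> V \<Longrightarrow> Poly_Mapping.single j (1::nat) \<in> exps V"
  by (simp add: exps_def)

lemma var_PA: "j \<in> V \<Longrightarrow> (monom (Poly_Mapping.single j 1) :: ('v, 'k::field) mpoly) \<in> PA V A \<longleftrightarrow> j \<in> A"
proof -
  assume j: "j \<in> V"
  have "(monom (Poly_Mapping.single j 1) :: ('v, 'k) mpoly) \<in> PA V A \<longleftrightarrow> Poly_Mapping.single j 1 \<in> PE V A"
    unfolding PA_def by (rule monom_MI[OF var_exps[OF j]])
  also have "\<dots> \<longleftrightarrow> j \<in> A" using var_exps[OF j] unfolding PE_def by (auto simp: lookup_single when_def)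
  finally show ?thesis .
qed

lemma PA_inj:
  assumes "A \<subseteq> V" "B \<subseteq> V" "(PA V A :: ('v, 'k::field) mpoly set) = PA V B"
  shows "A = B"
proof -
  have "j \<in> A \<longleftrightarrow> j \<in> B" if "j \<in> V" for j
    using var_PA[OF that, of A, where 'k='k] var_PA[OF that, of B, where 'k='k] assms(3) by simp
  then show ?thesis using assms(1,2) by blast
qed

lemma exps_sum: "finite S \<Longrightarrow> (\<forall>x\<in>S. h x \<in> exps V) \<Longrightarrow> sum h S \<in> exps V"
  by (induction S rule: finite_induct) (simp_all add: exps_add)

lemma prime_monom_var:
  assumes P: "prime_ideal V (P :: ('v, 'k::field) mpoly set)"
  shows "b \<in> exps V \<Longrightarrow> monom b \<in> P \<Longrightarrow> \<exists>j\<in>Poly_Mapping.keys b. monom (Poly_Mapping.single j 1) \<in> P"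
proof (induction "dg b" arbitrary: b rule: less_induct)
  case less
  show ?case
  proof (cases "b = 0")
    case True
    then have "monom b = (1 :: ('v,'k) mpoly)" by (simp add: monom_def)
    then show ?thesis using less.prems prime_one[OF P] by simp
  next
    case False
    then obtain j where j: "j \<in> Poly_Mapping.keys b" by (metis keys_eq_empty ex_in_conv)
    define b' where "b' = b - Poly_Mapping.single j 1"
    have bj: "Poly_Mapping.lookup b j \<ge> 1" using j by (simp add: in_keys_iff)
    have bb: "b = b' + Poly_Mapping.single j 1"
      unfolding b'_def by (rule poly_mapping_eqI) (use bj in \<open>auto simp: lookup_add lookup_minus lookup_single when_def\<close>)
    have le: "\<forall>v. Poly_Mapping.lookup b' v \<le> Poly_Mapping.lookup b v"
      unfolding b'_def by (simp add: lookup_minus)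
    have ne: "b' \<noteq> b" using bb by (metis add_cancel_left_right single_zero one_neq_zero inj_single inj_eq)
    have kb': "Poly_Mapping.keys b' \<subseteq> Poly_Mapping.keys b" by (rule keys_le[OF le])
    have b'e: "b' \<in> exps V" using kb' less.prems(1) unfolding exps_def by blast
    have je: "Poly_Mapping.single j 1 \<in> exps V" using j less.prems(1) unfolding exps_def by auto
    have "monom b' * monom (Poly_Mapping.single j 1) \<in> P" using less.prems(2) bb by (simp add: monom_mult)
    then have "monom b' \<in> P \<or> monom (Poly_Mapping.single j 1) \<in> P"
      using P b'e je unfolding prime_ideal_def by simp
    then show ?thesis
    proof
      assume "monom b' \<in> P"
      then obtain j' where "j' \<in> Poly_Mapping.keys b'" "monom (Poly_Mapping.single j' 1) \<in> P"
        using less.hyps[OF dg_less[OF le ne] b'e] by blast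
      then show ?thesis using kb' by blast
    next
      assume "monom (Poly_Mapping.single j 1) \<in> P"
      then show ?thesis using j by blast
    qed
  qed
qed

section \<open>Associated primes of monomial ideals\<close>

lemma Ass_MI_sup:
  assumes u: "upcl V E" and A: "assp V E A"
  shows "(PA V A :: ('v::linorder, 'k::field) mpoly set) \<in> Ass V (MI V E)"
proof -
  obtain c where c: "c \<in> exps V" and pat: "\<forall>b\<in>exps V. (c + b \<in> E \<longleftrightarrow> (\<exists>j\<in>A. 0 < Poly_Mapping.lookup b j))"
    using A unfolding assp_def by blast
  have "PA V A = {g \<in> polys V. g * (monom c :: ('v,'k) mpoly) \<in> MI V E}"
  proof (rule set_eqI)
    fix g :: "('v,'k) mpoly"
    show "g \<in> PA V A \<longleftrightarrow> g \<in> {g \<in> polys V. g * monom c \<in> MI V E}"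
    proof (cases "g \<in> polys V")
      case True
      have ke: "\<forall>a\<in>Poly_Mapping.keys g. a \<in> exps V" using True unfolding polys_def exps_def by blast
      have "g * monom c \<in> MI V E \<longleftrightarrow> (\<forall>a\<in>Poly_Mapping.keys g. c + a \<in> E)"
        using monom_mult_MI[OF c True, of E] by (simp add: mult.commute)
      also have "\<dots> \<longleftrightarrow> (\<forall>a\<in>Poly_Mapping.keys g. a \<in> PE V A)"
        using pat ke unfolding PE_def by auto
      also have "\<dots> \<longleftrightarrow> g \<in> PA V A" using True unfolding PA_def MI_def by blast
      finally show ?thesis using True by blast
    next
      case False
      then show ?thesis unfolding PA_def MI_def by blast
    qed
  qed
  moreover have "monom c \<in> polys V" using c by simp
  ultimately show ?thesis unfolding Ass_def using PA_prime by blast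
qed

lemma Ass_MI_sub:
  assumes u: "upcl V E" and P: "P \<in> Ass V (MI V E :: ('v::linorder, 'k::field) mpoly set)"
  shows "\<exists>A. assp V E A \<and> P = PA V A"
proof -
  have pr: "prime_ideal V P" using P unfolding Ass_def by blast
  obtain f where f: "f \<in> polys V" and Pdef: "P = {g \<in> polys V. g * f \<in> MI V E}"
    using P unfolding Ass_def by blast
  have JP: "is_ideal V P" using prime_ideal_ideal[OF pr] .
  have mon: "monom t \<in> P" if "g \<in> P" "t \<in> Poly_Mapping.keys g" for g t
    using Ass_monomials[OF u f Pdef pr that] .
  define EP where "EP = {b \<in> exps V. monom b \<in> P}"
  have PEP: "P = MI V EP"
  proof
    show "P \<subseteq> MI V EP"
    proof
      fix g assume g: "g \<in> P"
      then have gp: "g \<in> polys V" using Pdef by blast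
      have "Poly_Mapping.keys g \<subseteq> EP"
        using gp mon[OF g] unfolding EP_def polys_def exps_def by blast
      then show "g \<in> MI V EP" using gp unfolding MI_def by blast
    qed
    show "MI V EP \<subseteq> P" by (rule MI_least[OF JP]) (simp add: EP_def)
  qed
  define A where "A = {j \<in> V. (monom (Poly_Mapping.single j 1) :: ('v,'k) mpoly) \<in> P}"
  have EPA: "EP = PE V A"
  proof
    show "EP \<subseteq> PE V A"
    proof
      fix b assume b: "b \<in> EP"
      then obtain j where j: "j \<in> Poly_Mapping.keys b" "monom (Poly_Mapping.single j 1) \<in> P"
        using prime_monom_var[OF pr] unfolding EP_def by blast
      then have "j \<in> A" using b unfolding EP_def A_def exps_def by blast
      moreover have "0 < Poly_Mapping.lookup b j" using j by (simp add: in_keys_iff)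
      ultimately show "b \<in> PE V A" using b unfolding EP_def PE_def by blast
    qed
    show "PE V A \<subseteq> EP"
    proof
      fix b assume b: "b \<in> PE V A"
      then obtain j where j: "j \<in> A" "0 < Poly_Mapping.lookup b j" and be: "b \<in> exps V" unfolding PE_def by blast
      define b' where "b' = b - Poly_Mapping.single j 1"
      have bb: "b = b' + Poly_Mapping.single j 1"
        unfolding b'_def by (rule poly_mapping_eqI) (use j in \<open>auto simp: lookup_add lookup_minus lookup_single when_def\<close>)
      have le: "\<forall>v. Poly_Mapping.lookup b' v \<le> Poly_Mapping.lookup b v"
        unfolding b'_def by (simp add: lookup_minus)
      have b'e: "b' \<in> exps V" using keys_le[OF le] be unfolding exps_def by blast
      have "monom (Poly_Mapping.single j 1) \<in> P" using j unfolding A_def by blast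
      then have "monom b' * monom (Poly_Mapping.single j 1) \<in> P"
        using ideal_mult[OF JP] b'e by simp
      then have "monom b \<in> P" using bb by (simp add: monom_mult)
      then show "b \<in> EP" using be unfolding EP_def by blast
    qed
  qed
  have AV: "A \<subseteq> V" unfolding A_def by blast
  have PPA: "P = PA V A" unfolding PA_def using PEP EPA by simp
  have f0: "f \<noteq> 0"
  proof
    assume "f = 0"
    then have "P = polys V" using Pdef by (simp add: MI_def)
    then show False using pr unfolding prime_ideal_def by blast
  qed
  have monP: "monom b \<in> P \<longleftrightarrow> (\<forall>a\<in>Poly_Mapping.keys f. b + a \<in> E)" if b: "b \<in> exps V" for b
    using monom_mult_MI[OF b f, of E] b Pdef by simp
  have "\<exists>a\<in>Poly_Mapping.keys f. \<forall>b\<in>exps V. a + b \<in> E \<longrightarrow> b \<in> PE V A"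
  proof (rule ccontr)
    assume "\<not> ?thesis"
    then have "\<forall>a\<in>Poly_Mapping.keys f. \<exists>t. t \<in> exps V \<and> a + t \<in> E \<and> t \<notin> PE V A" by blast
    then obtain tf where tf: "\<forall>a\<in>Poly_Mapping.keys f. tf a \<in> exps V \<and> a + tf a \<in> E \<and> tf a \<notin> PE V A"
      by metis
    define T where "T = (\<Sum>a\<in>Poly_Mapping.keys f. tf a)"
    have Te: "T \<in> exps V" unfolding T_def using tf by (intro exps_sum) auto
    have "\<forall>a\<in>Poly_Mapping.keys f. T + a \<in> E"
    proof
      fix a assume a: "a \<in> Poly_Mapping.keys f"
      have Tsplit: "T = tf a + (\<Sum>x\<in>Poly_Mapping.keys f - {a}. tf x)"
        unfolding T_def using a by (simp add: sum.remove)
      moreover have "(\<Sum>x\<in>Poly_Mapping.keys f - {a}. tf x) \<in> exps V" using tf by (intro exps_sum) auto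
      moreover have "a + tf a \<in> E" using tf a by blast
      ultimately have "(a + tf a) + (\<Sum>x\<in>Poly_Mapping.keys f - {a}. tf x) \<in> E" using u unfolding upcl_def by blast
      moreover have "T + a = (a + tf a) + (\<Sum>x\<in>Poly_Mapping.keys f - {a}. tf x)"
        using Tsplit by (simp add: algebra_simps)
      ultimately show "T + a \<in> E" by simp
    qed
    then have "monom T \<in> P" using monP[OF Te] by blast
    then have "T \<in> PE V A" using Te EPA unfolding EP_def by blast
    then obtain j where j: "j \<in> A" "0 < Poly_Mapping.lookup T j" unfolding PE_def by blast
    then have "0 < (\<Sum>a\<in>Poly_Mapping.keys f. Poly_Mapping.lookup (tf a) j)" unfolding T_def by (simp add: lookup_sum)
    then have "\<exists>a\<in>Poly_Mapping.keys f. 0 < Poly_Mapping.lookup (tf a) j"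
    proof (rule contrapos_pp)
      assume "\<not> (\<exists>a\<in>Poly_Mapping.keys f. 0 < Poly_Mapping.lookup (tf a) j)"
      then have "\<forall>a\<in>Poly_Mapping.keys f. Poly_Mapping.lookup (tf a) j = 0" by auto
      then show "\<not> 0 < (\<Sum>a\<in>Poly_Mapping.keys f. Poly_Mapping.lookup (tf a) j)" by simp
    qed
    then obtain a where a: "a \<in> Poly_Mapping.keys f" "0 < Poly_Mapping.lookup (tf a) j" by blast
    then have "tf a \<in> PE V A" using tf j unfolding PE_def by blast
    then show False using tf a by blast
  qed
  then obtain c where c: "c \<in> Poly_Mapping.keys f" and cpat: "\<forall>b\<in>exps V. c + b \<in> E \<longrightarrow> b \<in> PE V A" by blast
  have ce: "c \<in> exps V" using c f unfolding polys_def exps_def by blast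
  have "\<forall>b\<in>exps V. (c + b \<in> E \<longleftrightarrow> (\<exists>j\<in>A. 0 < Poly_Mapping.lookup b j))"
  proof (intro ballI iffI)
    fix b assume "b \<in> exps V" "c + b \<in> E"
    then show "\<exists>j\<in>A. 0 < Poly_Mapping.lookup b j" using cpat unfolding PE_def by blast
  next
    fix b assume b: "b \<in> exps V" and "\<exists>j\<in>A. 0 < Poly_Mapping.lookup b j"
    then have "b \<in> EP" using EPA unfolding PE_def by blast
    then have "monom b \<in> P" unfolding EP_def by blast
    then have "b + c \<in> E" using monP[OF b] c by blast
    then show "c + b \<in> E" by (simp add: add.commute)
  qed
  then have "assp V E A" unfolding assp_def using AV ce by blast
  then show ?thesis using PPA by blast
qed

theorem Ass_MI:
  assumes u: "upcl V E"
  shows "Ass V (MI V E :: ('v::linorder, 'k::field) mpoly set) = PA V ` {A. assp V E A}"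
  using Ass_MI_sub[OF u] Ass_MI_sup[OF u] by blast

lemma le_split:
  fixes a b :: "'v \<Rightarrow>\<^sub>0 nat"
  assumes "\<forall>v. Poly_Mapping.lookup a v \<le> Poly_Mapping.lookup b v"
  shows "b = a + (b - a)"
  by (rule poly_mapping_eqI) (use assms in \<open>simp add: lookup_add lookup_minus\<close>)

lemma minus_exps: "(b :: 'v \<Rightarrow>\<^sub>0 nat) \<in> exps V \<Longrightarrow> b - a \<in> exps V"
  using keys_le[of "b - a" b] unfolding exps_def by (simp add: lookup_minus)

lemma upcl_le:
  assumes u: "upcl V E" and a: "a \<in> E" and b: "b \<in> exps V"
    and le: "\<forall>v. Poly_Mapping.lookup a v \<le> Poly_Mapping.lookup b v"
  shows "b \<in> E"
proof -
  have "a + (b - a) \<in> E" using u a minus_exps[OF b] unfolding upcl_def by blast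
  then show ?thesis using le_split[OF le] by simp
qed

lemma upcl_exps_mem: "upcl V E \<Longrightarrow> a \<in> E \<Longrightarrow> a \<in> exps V"
  unfolding upcl_def by blast

lemma exps_lookup: "a \<in> exps V \<Longrightarrow> j \<notin> V \<Longrightarrow> Poly_Mapping.lookup a j = 0"
  unfolding exps_def by (auto simp: in_keys_iff)

lemma exps_eqI:
  fixes a b :: "'v \<Rightarrow>\<^sub>0 nat"
  assumes "a \<in> exps V" "b \<in> exps V" "\<forall>j\<in>V. Poly_Mapping.lookup a j = Poly_Mapping.lookup b j"
  shows "a = b"
proof (rule poly_mapping_eqI)
  fix j show "Poly_Mapping.lookup a j = Poly_Mapping.lookup b j"
    using assms exps_lookup[of a V j] exps_lookup[of b V j] by (cases "j \<in> V") auto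
qed

definition pmk :: "'v set \<Rightarrow> ('v \<Rightarrow> nat) \<Rightarrow> ('v \<Rightarrow>\<^sub>0 nat)" where
  "pmk V g = (\<Sum>j\<in>V. Poly_Mapping.single j (g j))"

lemma lookup_pmk: "finite V \<Longrightarrow> Poly_Mapping.lookup (pmk V g) j = (if j \<in> V then g j else 0)"
  unfolding pmk_def by (simp add: lookup_sum lookup_single when_def)

lemma pmk_exps: "finite V \<Longrightarrow> pmk V g \<in> exps V"
  unfolding exps_def by (auto simp: in_keys_iff lookup_pmk split: if_splits)

section \<open>Weighting\<close>

definition dvw :: "('v \<Rightarrow> nat) \<Rightarrow> ('v \<Rightarrow>\<^sub>0 nat) \<Rightarrow> ('v \<Rightarrow>\<^sub>0 nat)" where
  "dvw w u = Poly_Mapping.mapp (\<lambda>j x. x div w j) u"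

definition mlw :: "('v \<Rightarrow> nat) \<Rightarrow> ('v \<Rightarrow>\<^sub>0 nat) \<Rightarrow> ('v \<Rightarrow>\<^sub>0 nat)" where
  "mlw w u = Poly_Mapping.mapp (\<lambda>j x. w j * x) u"

lemma lookup_dvw[simp]: "Poly_Mapping.lookup (dvw w u) j = Poly_Mapping.lookup u j div w j"
  unfolding dvw_def by (simp add: lookup_mapp when_def in_keys_iff)

lemma lookup_mlw[simp]: "Poly_Mapping.lookup (mlw w u) j = w j * Poly_Mapping.lookup u j"
  unfolding mlw_def by (simp add: lookup_mapp when_def in_keys_iff)

lemma dvw_exps: "u \<in> exps V \<Longrightarrow> dvw w u \<in> exps V"
  unfolding exps_def dvw_def using keys_mapp_subset[of "\<lambda>j x. x div w j" u] by simp

lemma mlw_exps: "u \<in> exps V \<Longrightarrow> mlw w u \<in> exps V"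
  unfolding exps_def mlw_def using keys_mapp_subset[of "\<lambda>j x. w j * x" u] by simp

lemma weight_exp_mlw: "weight_exp w a = mlw w a"
proof (rule poly_mapping_eqI)
  fix k
  show "Poly_Mapping.lookup (weight_exp w a) k = Poly_Mapping.lookup (mlw w a) k"
    unfolding weight_exp_def by (cases "k \<in> Poly_Mapping.keys a") (simp_all add: lookup_sum lookup_single when_def in_keys_iff)
qed

lemma dvw_mlw: "a \<in> exps V \<Longrightarrow> \<forall>j\<in>V. 0 < w j \<Longrightarrow> dvw w (mlw w a) = a"
  by (rule exps_eqI[OF dvw_exps[OF mlw_exps] _]) auto

definition preW :: "'v set \<Rightarrow> ('v \<Rightarrow> nat) \<Rightarrow> ('v \<Rightarrow>\<^sub>0 nat) set \<Rightarrow> ('v \<Rightarrow>\<^sub>0 nat) set" where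
  "preW V w E = {u \<in> exps V. dvw w u \<in> E}"

lemma div_add_le: "(a::nat) div w + b div w \<le> (a + b) div w"
  using div_add1_eq[of a b w] by linarith

lemma preW_upcl:
  assumes u: "upcl V E" shows "upcl V (preW V w E)"
  unfolding upcl_def
proof (intro conjI ballI)
  show "preW V w E \<subseteq> exps V" unfolding preW_def by blast
  fix a c assume a: "a \<in> preW V w E" and c: "c \<in> exps V"
  have ac: "a + c \<in> exps V" using a c exps_add[of a V c] unfolding preW_def by blast
  have "dvw w (a + c) \<in> E"
  proof (rule upcl_le[OF u])
    show "dvw w a \<in> E" using a unfolding preW_def by blast
    show "dvw w (a + c) \<in> exps V" using dvw_exps[OF ac] .
    show "\<forall>v. Poly_Mapping.lookup (dvw w a) v \<le> Poly_Mapping.lookup (dvw w (a + c)) v"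
      by (simp add: lookup_add div_le_mono)
  qed
  then show "a + c \<in> preW V w E" using ac unfolding preW_def by blast
qed

lemma preW_exps: "preW V w (exps V) = exps V"
  unfolding preW_def using dvw_exps[of _ V w] by blast

lemma sub_div: "0 < (w::nat) \<Longrightarrow> w * e \<le> u \<Longrightarrow> (u - w * e) div w = u div w - e"
proof -
  assume w: "0 < w" and le: "w * e \<le> u"
  obtain r where r: "u = w * e + r" using le_Suc_ex[OF le] by blast
  have "(u - w * e) div w = r div w" using r by simp
  moreover have "u div w = e + r div w" using r w by simp
  ultimately show ?thesis by simp
qed

lemma preW_psum:
  assumes E: "upcl V E" and F: "upcl V F" and w: "\<forall>j\<in>V. 0 < w j"
  shows "psum (preW V w E) (preW V w F) = preW V w (psum E F)"
proof
  show "psum (preW V w E) (preW V w F) \<subseteq> preW V w (psum E F)"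
  proof
    fix x assume "x \<in> psum (preW V w E) (preW V w F)"
    then obtain a b where x: "x = a + b" and a: "a \<in> preW V w E" and b: "b \<in> preW V w F"
      unfolding psum_def by blast
    have xe: "x \<in> exps V" using a b x exps_add[of a V b] unfolding preW_def by blast
    have "dvw w a + dvw w b \<in> psum E F" using a b unfolding preW_def psum_def by blast
    moreover have "\<forall>v. Poly_Mapping.lookup (dvw w a + dvw w b) v \<le> Poly_Mapping.lookup (dvw w x) v"
      using x by (simp add: lookup_add div_add_le)
    ultimately have "dvw w x \<in> psum E F" using upcl_le[OF psum_upcl[OF E F] _ dvw_exps[OF xe]] by blast
    then show "x \<in> preW V w (psum E F)" using xe unfolding preW_def by blast
  qed
  show "preW V w (psum E F) \<subseteq> psum (preW V w E) (preW V w F)"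
  proof
    fix u assume u: "u \<in> preW V w (psum E F)"
    then obtain e f where ef: "dvw w u = e + f" "e \<in> E" "f \<in> F" and ue: "u \<in> exps V"
      unfolding preW_def psum_def by blast
    have ee: "e \<in> exps V" using ef E unfolding upcl_def by blast
    have fe: "f \<in> exps V" using ef F unfolding upcl_def by blast
    have lk: "Poly_Mapping.lookup u j div w j = Poly_Mapping.lookup e j + Poly_Mapping.lookup f j" for j
      using arg_cong[OF ef(1), of "\<lambda>x. Poly_Mapping.lookup x j"] by (simp add: lookup_add)
    let ?u1 = "mlw w e"
    have le: "\<forall>j. Poly_Mapping.lookup ?u1 j \<le> Poly_Mapping.lookup u j"
    proof
      fix j
      have "w j * Poly_Mapping.lookup e j \<le> w j * (Poly_Mapping.lookup u j div w j)" using lk[of j] by simp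
      also have "\<dots> \<le> Poly_Mapping.lookup u j" by simp
      finally show "Poly_Mapping.lookup ?u1 j \<le> Poly_Mapping.lookup u j" by simp
    qed
    have u1: "?u1 \<in> preW V w E" using dvw_mlw[OF ee w] ef mlw_exps[OF ee] unfolding preW_def by simp
    have "dvw w (u - ?u1) = f"
    proof (rule exps_eqI[OF dvw_exps[OF minus_exps[OF ue]] fe], intro ballI)
      fix j assume j: "j \<in> V"
      have "Poly_Mapping.lookup (dvw w (u - ?u1)) j = (Poly_Mapping.lookup u j - w j * Poly_Mapping.lookup e j) div w j"
        by (simp add: lookup_minus)
      also have "\<dots> = Poly_Mapping.lookup u j div w j - Poly_Mapping.lookup e j"
        using sub_div[of "w j" "Poly_Mapping.lookup e j" "Poly_Mapping.lookup u j"] le w j by simp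
      also have "\<dots> = Poly_Mapping.lookup f j" using lk[of j] by simp
      finally show "Poly_Mapping.lookup (dvw w (u - ?u1)) j = Poly_Mapping.lookup f j" .
    qed
    then have u2: "u - ?u1 \<in> preW V w F" using ef minus_exps[OF ue] unfolding preW_def by simp
    have "u = ?u1 + (u - ?u1)" using le_split[OF le] .
    then show "u \<in> psum (preW V w E) (preW V w F)" using u1 u2 unfolding psum_def by blast
  qed
qed

lemma preW_powE:
  assumes E: "upcl V E" and w: "\<forall>j\<in>V. 0 < w j"
  shows "powE V (preW V w E) m = preW V w (powE V E m)"
proof (induction m)
  case 0 then show ?case by (simp add: preW_exps)
next
  case (Suc m) then show ?case using preW_psum[OF E powE_upcl[OF E] w] by simp
qed

lemma weighting_MI:
  assumes m: "monomial_ideal {1..n} (I :: (nat,'k::field) mpoly set)" and w: "\<forall>j\<in>{1..n}. 0 < w j"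
  shows "weighting n w I = MI {1..n} (preW {1..n} w (expI {1..n} I))"
  unfolding weighting_def
proof (rule gen_MI)
  let ?V = "{1..n::nat}"
  let ?E = "expI ?V I"
  have uE: "upcl ?V ?E" using monomial_MI[OF m] by blast
  show u: "upcl ?V (preW ?V w ?E)" by (rule preW_upcl[OF uE])
  let ?S = "{monom (weight_exp w a) |a. a \<in> mingens ?V I} :: (nat,'k) mpoly set"
  show "?S \<subseteq> MI ?V (preW ?V w ?E)"
  proof
    fix x assume "x \<in> ?S"
    then obtain a where x: "x = monom (mlw w a)" and a: "a \<in> mingens ?V I" by (auto simp: weight_exp_mlw)
    have aE: "a \<in> ?E" using a mingens_expI by blast
    have ae: "a \<in> exps ?V" using aE unfolding expI_def by blast
    have "mlw w a \<in> preW ?V w ?E" unfolding preW_def using dvw_mlw[OF ae w] aE mlw_exps[OF ae] by simp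
    then show "x \<in> MI ?V (preW ?V w ?E)" using x mlw_exps[OF ae] by (simp add: monom_MI)
  qed
  show "\<forall>u\<in>preW ?V w ?E. monom u \<in> ideal_gen ?V ?S"
  proof
    fix u assume u: "u \<in> preW ?V w ?E"
    then have ue: "u \<in> exps ?V" and du: "dvw w u \<in> ?E" unfolding preW_def by blast+
    obtain g where g: "g \<in> mingens ?V I" and gle: "\<forall>v. Poly_Mapping.lookup g v \<le> Poly_Mapping.lookup (dvw w u) v"
      using mingens_below[OF m du] by blast
    have ge: "g \<in> exps ?V" using g mingens_expI unfolding expI_def by blast
    have le: "\<forall>v. Poly_Mapping.lookup (mlw w g) v \<le> Poly_Mapping.lookup u v"
    proof
      fix v
      have "w v * Poly_Mapping.lookup g v \<le> w v * (Poly_Mapping.lookup u v div w v)"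
        using gle by (simp add: mult_le_mono2)
      also have "\<dots> \<le> Poly_Mapping.lookup u v" by simp
      finally show "Poly_Mapping.lookup (mlw w g) v \<le> Poly_Mapping.lookup u v" by simp
    qed
    have Sp: "?S \<subseteq> polys ?V"
    proof
      fix x assume "x \<in> ?S"
      then obtain a where x: "x = monom (mlw w a)" and a: "a \<in> mingens ?V I" by (auto simp: weight_exp_mlw)
      have "a \<in> exps ?V" using a mingens_expI unfolding expI_def by blast
      then show "x \<in> polys ?V" using x mlw_exps by simp
    qed
    have "monom (mlw w g) \<in> ?S" using g by (auto simp: weight_exp_mlw)
    then have "monom (mlw w g) \<in> ideal_gen ?V ?S" by (rule subsetD[OF ideal_gen_sup])
    then have "monom (u - mlw w g) * monom (mlw w g) \<in> ideal_gen ?V ?S"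
      using ideal_mult[OF ideal_gen_ideal[OF Sp]] minus_exps[OF ue] by simp
    then show "monom u \<in> ideal_gen ?V ?S" using le_split[OF le] by (simp add: monom_mult add.commute)
  qed
qed

lemma assp_preW:
  assumes fin: "finite V" and E: "upcl V E" and w: "\<forall>j\<in>V. 0 < w j"
  shows "assp V (preW V w E) A \<longleftrightarrow> assp V E A"
proof
  assume "assp V (preW V w E) A"
  then obtain c' where AV: "A \<subseteq> V" and c': "c' \<in> exps V"
    and pat: "\<forall>b\<in>exps V. (c' + b \<in> preW V w E \<longleftrightarrow> (\<exists>j\<in>A. 0 < Poly_Mapping.lookup b j))"
    unfolding assp_def by blast
  let ?c = "dvw w c'"
  have "\<forall>b\<in>exps V. (?c + b \<in> E \<longleftrightarrow> (\<exists>j\<in>A. 0 < Poly_Mapping.lookup b j))"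
  proof
    fix b assume b: "b \<in> exps V"
    have mb: "mlw w b \<in> exps V" using mlw_exps[OF b] .
    have ce: "c' + mlw w b \<in> exps V" using exps_add[OF c' mb] .
    have eq: "dvw w (c' + mlw w b) = ?c + b"
    proof (rule exps_eqI[OF dvw_exps[OF ce] exps_add[OF dvw_exps[OF c'] b]], intro ballI)
      fix j assume j: "j \<in> V"
      then show "Poly_Mapping.lookup (dvw w (c' + mlw w b)) j = Poly_Mapping.lookup (?c + b) j"
        using w by (simp add: lookup_add)
    qed
    have "(\<exists>j\<in>A. 0 < Poly_Mapping.lookup (mlw w b) j) \<longleftrightarrow> (\<exists>j\<in>A. 0 < Poly_Mapping.lookup b j)"
      using AV w by auto
    moreover have "c' + mlw w b \<in> preW V w E \<longleftrightarrow> (\<exists>j\<in>A. 0 < Poly_Mapping.lookup (mlw w b) j)"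
      using pat mb by blast
    moreover have "c' + mlw w b \<in> preW V w E \<longleftrightarrow> ?c + b \<in> E" using ce eq unfolding preW_def by simp
    ultimately show "?c + b \<in> E \<longleftrightarrow> (\<exists>j\<in>A. 0 < Poly_Mapping.lookup b j)" by blast
  qed
  then show "assp V E A" unfolding assp_def using AV dvw_exps[OF c'] by blast
next
  assume "assp V E A"
  then obtain c where AV: "A \<subseteq> V" and c: "c \<in> exps V"
    and pat: "\<forall>b\<in>exps V. (c + b \<in> E \<longleftrightarrow> (\<exists>j\<in>A. 0 < Poly_Mapping.lookup b j))"
    unfolding assp_def by blast
  let ?o = "pmk V (\<lambda>j. w j - 1)"
  let ?c' = "mlw w c + ?o"
  have c'e: "?c' \<in> exps V" using exps_add[OF mlw_exps[OF c] pmk_exps[OF fin]] .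
  have "\<forall>b\<in>exps V. (?c' + b \<in> preW V w E \<longleftrightarrow> (\<exists>j\<in>A. 0 < Poly_Mapping.lookup b j))"
  proof
    fix b assume b: "b \<in> exps V"
    let ?bb = "dvw w (b + ?o)"
    have bbe: "?bb \<in> exps V" using dvw_exps[OF exps_add[OF b pmk_exps[OF fin]]] .
    have ce: "?c' + b \<in> exps V" using exps_add[OF c'e b] .
    have eq: "dvw w (?c' + b) = c + ?bb"
    proof (rule exps_eqI[OF dvw_exps[OF ce] exps_add[OF c bbe]], intro ballI)
      fix j assume j: "j \<in> V"
      have "Poly_Mapping.lookup (dvw w (?c' + b)) j = (w j * Poly_Mapping.lookup c j + (Poly_Mapping.lookup b j + (w j - 1))) div w j"
        using j fin by (simp add: lookup_add lookup_pmk algebra_simps)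
      also have "\<dots> = Poly_Mapping.lookup c j + (Poly_Mapping.lookup b j + (w j - 1)) div w j"
        using w j by simp
      also have "\<dots> = Poly_Mapping.lookup (c + ?bb) j" using j fin by (simp add: lookup_add lookup_pmk)
      finally show "Poly_Mapping.lookup (dvw w (?c' + b)) j = Poly_Mapping.lookup (c + ?bb) j" .
    qed
    have pos: "0 < Poly_Mapping.lookup ?bb j \<longleftrightarrow> 0 < Poly_Mapping.lookup b j" if j: "j \<in> V" for j
    proof -
      have "Poly_Mapping.lookup ?bb j = (Poly_Mapping.lookup b j + (w j - 1)) div w j"
        using j fin by (simp add: lookup_add lookup_pmk)
      moreover have "0 < (x + (w j - 1)) div w j \<longleftrightarrow> 0 < x" for x
      proof -
        have "0 < w j" using w j by blast
        then show ?thesis by (simp add: div_greater_zero_iff) linarith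
      qed
      ultimately show ?thesis by simp
    qed
    have "?c' + b \<in> preW V w E \<longleftrightarrow> c + ?bb \<in> E" using ce eq unfolding preW_def by simp
    also have "\<dots> \<longleftrightarrow> (\<exists>j\<in>A. 0 < Poly_Mapping.lookup ?bb j)" using pat bbe by blast
    also have "\<dots> \<longleftrightarrow> (\<exists>j\<in>A. 0 < Poly_Mapping.lookup b j)" using pos AV by blast
    finally show "?c' + b \<in> preW V w E \<longleftrightarrow> (\<exists>j\<in>A. 0 < Poly_Mapping.lookup b j)" .
  qed
  then show "assp V (preW V w E) A" unfolding assp_def using AV c'e by blast
qed

section \<open>Expansion\<close>

lemma exp_vars_Sigma: "exp_vars n i = Sigma {1..n} (\<lambda>j. {1..i j})"
  unfolding exp_vars_def by auto

lemma finite_exp_vars: "finite (exp_vars n i)"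
  unfolding exp_vars_Sigma by (rule finite_SigmaI) auto

lemma mem_exp_vars: "(j, k) \<in> exp_vars n i \<longleftrightarrow> j \<in> {1..n} \<and> k \<in> {1..i j}"
  unfolding exp_vars_def by auto

definition dlt :: "(nat \<Rightarrow> nat) \<Rightarrow> nat \<Rightarrow> (nat \<times> nat \<Rightarrow>\<^sub>0 nat) \<Rightarrow> nat" where
  "dlt i j u = (\<Sum>k\<in>{1..i j}. Poly_Mapping.lookup u (j, k))"

definition dl :: "nat \<Rightarrow> (nat \<Rightarrow> nat) \<Rightarrow> (nat \<times> nat \<Rightarrow>\<^sub>0 nat) \<Rightarrow> (nat \<Rightarrow>\<^sub>0 nat)" where
  "dl n i u = pmk {1..n} (\<lambda>j. dlt i j u)"

definition preD :: "nat \<Rightarrow> (nat \<Rightarrow> nat) \<Rightarrow> (nat \<Rightarrow>\<^sub>0 nat) set \<Rightarrow> (nat \<times> nat \<Rightarrow>\<^sub>0 nat) set" where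
  "preD n i E = {u \<in> exps (exp_vars n i). dl n i u \<in> E}"

definition blk :: "nat \<Rightarrow> (nat \<Rightarrow> nat) \<Rightarrow> nat set \<Rightarrow> (nat \<times> nat) set" where
  "blk n i A = {q \<in> exp_vars n i. fst q \<in> A}"

definition Lf :: "nat \<Rightarrow> (nat \<Rightarrow> nat) \<Rightarrow> (nat \<Rightarrow>\<^sub>0 nat) \<Rightarrow> (nat \<times> nat \<Rightarrow>\<^sub>0 nat)" where
  "Lf n i c = pmk (exp_vars n i) (\<lambda>q. if snd q = 1 then Poly_Mapping.lookup c (fst q) else 0)"

lemma lookup_dl: "Poly_Mapping.lookup (dl n i u) j = (if j \<in> {1..n} then dlt i j u else 0)"
  unfolding dl_def by (simp add: lookup_pmk)

lemma dl_exps: "dl n i u \<in> exps {1..n}"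
  unfolding dl_def by (rule pmk_exps) simp

lemma dlt_add: "dlt i j (u + v) = dlt i j u + dlt i j v"
  unfolding dlt_def by (simp add: lookup_add sum.distrib)

lemma dlt_mono: "\<forall>q. Poly_Mapping.lookup u q \<le> Poly_Mapping.lookup v q \<Longrightarrow> dlt i j u \<le> dlt i j v"
  unfolding dlt_def by (rule sum_mono) blast

lemma dl_add: "dl n i (u + v) = dl n i u + dl n i v"
  by (rule poly_mapping_eqI) (simp add: lookup_add lookup_dl dlt_add)

lemma dl_zero: "dl n i 0 = 0"
  by (rule poly_mapping_eqI) (simp add: lookup_dl dlt_def)

lemma dlt_pos: "0 < dlt i j u \<longleftrightarrow> (\<exists>k\<in>{1..i j}. 0 < Poly_Mapping.lookup u (j, k))"
proof -
  have "dlt i j u = 0 \<longleftrightarrow> (\<forall>k\<in>{1..i j}. Poly_Mapping.lookup u (j, k) = 0)"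
    unfolding dlt_def by (rule sum_eq_0_iff) simp
  then show ?thesis by auto
qed

lemma dlt_single: "dlt i j (Poly_Mapping.single (j', k) c) = (if j' = j \<and> k \<in> {1..i j} then c else 0)"
  unfolding dlt_def lookup_single when_def by (cases "j' = j") (simp_all add: sum.delta sum.delta')

lemma dl_single:
  assumes "(j, k) \<in> exp_vars n i"
  shows "dl n i (Poly_Mapping.single (j, k) 1) = Poly_Mapping.single j 1"
  by (rule poly_mapping_eqI) (use assms in \<open>auto simp: lookup_dl dlt_single lookup_single when_def mem_exp_vars\<close>)

lemma lookup_Lf: "Poly_Mapping.lookup (Lf n i c) q = (if q \<in> exp_vars n i \<and> snd q = 1 then Poly_Mapping.lookup c (fst q) else 0)"
  unfolding Lf_def by (simp add: lookup_pmk finite_exp_vars)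

lemma Lf_exps: "Lf n i c \<in> exps (exp_vars n i)"
  unfolding Lf_def by (rule pmk_exps[OF finite_exp_vars])

lemma dl_Lf:
  assumes c: "c \<in> exps {1..n}" and i: "\<forall>j\<in>{1..n}. 0 < i j"
  shows "dl n i (Lf n i c) = c"
proof (rule exps_eqI[OF dl_exps c], intro ballI)
  fix j assume j: "j \<in> {1..n}"
  have "dlt i j (Lf n i c) = (\<Sum>k\<in>{1..i j}. if k = 1 then Poly_Mapping.lookup c j else 0)"
    unfolding dlt_def by (rule sum.cong) (use j in \<open>auto simp: lookup_Lf mem_exp_vars\<close>)
  also have "\<dots> = Poly_Mapping.lookup c j"
  proof -
    have "1 \<in> {1..i j}" using i j by (simp add: Suc_leI)
    then show ?thesis by (simp add: sum.delta)
  qed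
  finally show "Poly_Mapping.lookup (dl n i (Lf n i c)) j = Poly_Mapping.lookup c j" using j by (simp add: lookup_dl)
qed

lemma Lf_pos: "0 < Poly_Mapping.lookup (Lf n i c) q \<longleftrightarrow> q \<in> exp_vars n i \<and> snd q = 1 \<and> 0 < Poly_Mapping.lookup c (fst q)"
  by (auto simp: lookup_Lf)

lemma preD_exps: "preD n i (exps {1..n}) = exps (exp_vars n i)"
  unfolding preD_def using dl_exps by blast

definition Dj :: "nat \<Rightarrow> (nat \<Rightarrow> nat) \<Rightarrow> nat \<Rightarrow> nat \<Rightarrow> (nat \<times> nat \<Rightarrow>\<^sub>0 nat) set" where
  "Dj n i j m = {u \<in> exps (exp_vars n i). m \<le> dlt i j u}"

lemma Dj_upcl: "upcl (exp_vars n i) (Dj n i j m)"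
  unfolding upcl_def Dj_def by (auto simp: exps_add dlt_add)

lemma Dj_zero: "Dj n i j 0 = exps (exp_vars n i)"
  unfolding Dj_def by simp

lemma split_var:
  assumes u: "u \<in> exps (exp_vars n i)" and k: "0 < Poly_Mapping.lookup u (j, k)"
  shows "(j, k) \<in> exp_vars n i" "u = Poly_Mapping.single (j, k) 1 + (u - Poly_Mapping.single (j, k) 1)"
    "dlt i j (u - Poly_Mapping.single (j, k) 1) = dlt i j u - dlt i j (Poly_Mapping.single (j, k) 1)"
proof -
  show jk: "(j, k) \<in> exp_vars n i" using u k unfolding exps_def by (auto simp: in_keys_iff)
  have "\<forall>q. Poly_Mapping.lookup (Poly_Mapping.single (j, k) 1) q \<le> Poly_Mapping.lookup u q"
    using k by (auto simp: lookup_single when_def)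
  then show eq: "u = Poly_Mapping.single (j, k) 1 + (u - Poly_Mapping.single (j, k) 1)" by (rule le_split)
  have "dlt i j u = dlt i j (Poly_Mapping.single (j, k) 1) + dlt i j (u - Poly_Mapping.single (j, k) 1)"
    by (subst eq) (simp only: dlt_add[symmetric] eq[symmetric])
  then show "dlt i j (u - Poly_Mapping.single (j, k) 1) = dlt i j u - dlt i j (Poly_Mapping.single (j, k) 1)" by simp
qed

lemma exp_prime_MI:
  assumes j: "j \<in> {1..n}"
  shows "(exp_prime n i j :: (nat \<times> nat, 'k::field) mpoly set) = MI (exp_vars n i) (Dj n i j 1)"
  unfolding exp_prime_def
proof (rule gen_MI[OF Dj_upcl])
  let ?V = "exp_vars n i"
  let ?S = "{var (j, k) |k. k \<in> {1..i j}} :: (nat \<times> nat, 'k) mpoly set"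
  show "?S \<subseteq> MI ?V (Dj n i j 1)"
  proof
    fix x assume "x \<in> ?S"
    then obtain k where x: "x = monom (Poly_Mapping.single (j, k) 1)" and k: "k \<in> {1..i j}" unfolding var_def by blast
    have jk: "(j, k) \<in> ?V" using j k by (simp add: mem_exp_vars)
    have "Poly_Mapping.single (j, k) 1 \<in> Dj n i j 1" unfolding Dj_def using var_exps[OF jk] k dlt_single[of i j j k] by simp
    then show "x \<in> MI ?V (Dj n i j 1)" using x var_exps[OF jk] by (simp add: monom_MI)
  qed
  have Sp: "?S \<subseteq> polys ?V"
  proof
    fix x assume "x \<in> ?S"
    then obtain k where x: "x = monom (Poly_Mapping.single (j, k) 1)" and k: "k \<in> {1..i j}" unfolding var_def by blast
    have jk: "(j, k) \<in> ?V" using j k by (simp add: mem_exp_vars)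
    then show "x \<in> polys ?V" using x var_exps[OF jk] by simp
  qed
  show "\<forall>u\<in>Dj n i j 1. monom u \<in> ideal_gen ?V ?S"
  proof
    fix u assume u: "u \<in> Dj n i j 1"
    then have ue: "u \<in> exps ?V" and "0 < dlt i j u" unfolding Dj_def by auto
    then obtain k where k: "k \<in> {1..i j}" "0 < Poly_Mapping.lookup u (j, k)" using dlt_pos by blast
    note sv = split_var[OF ue k(2)]
    have "var (j, k) \<in> ?S" using k by blast
    then have "monom (Poly_Mapping.single (j, k) 1) \<in> ideal_gen ?V ?S" unfolding var_def by (rule subsetD[OF ideal_gen_sup])
    then have "monom (u - Poly_Mapping.single (j, k) 1) * monom (Poly_Mapping.single (j, k) 1) \<in> ideal_gen ?V ?S"
      using ideal_mult[OF ideal_gen_ideal[OF Sp]] minus_exps[OF ue] by simp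
    then show "monom u \<in> ideal_gen ?V ?S" using sv(2) by (simp add: monom_mult add.commute)
  qed
qed

lemma powE_Dj: "powE (exp_vars n i) (Dj n i j 1) m = Dj n i j m"
proof (induction m)
  case 0 then show ?case by (simp add: Dj_zero)
next
  case (Suc m)
  let ?V = "exp_vars n i"
  have "psum (Dj n i j 1) (Dj n i j m) = Dj n i j (Suc m)"
  proof
    show "psum (Dj n i j 1) (Dj n i j m) \<subseteq> Dj n i j (Suc m)"
      unfolding psum_def Dj_def by (auto simp: exps_add dlt_add)
    show "Dj n i j (Suc m) \<subseteq> psum (Dj n i j 1) (Dj n i j m)"
    proof
      fix u assume u: "u \<in> Dj n i j (Suc m)"
      then have ue: "u \<in> exps ?V" and d: "Suc m \<le> dlt i j u" unfolding Dj_def by auto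
      then obtain k where k: "k \<in> {1..i j}" "0 < Poly_Mapping.lookup u (j, k)" using dlt_pos[of i j u] by auto
      note sv = split_var[OF ue k(2)]
      have "Poly_Mapping.single (j, k) 1 \<in> Dj n i j 1" unfolding Dj_def using var_exps[OF sv(1)] k dlt_single[of i j j k] by simp
      moreover have "u - Poly_Mapping.single (j, k) 1 \<in> Dj n i j m"
        unfolding Dj_def using minus_exps[OF ue] sv(3) d k dlt_single[of i j j k] by simp
      ultimately show "u \<in> psum (Dj n i j 1) (Dj n i j m)" using sv(2) unfolding psum_def by blast
    qed
  qed
  then show ?case using Suc by simp
qed

definition Fa :: "nat \<Rightarrow> (nat \<Rightarrow> nat) \<Rightarrow> (nat \<Rightarrow>\<^sub>0 nat) \<Rightarrow> nat set \<Rightarrow> (nat \<times> nat \<Rightarrow>\<^sub>0 nat) set" where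
  "Fa n i a S = {u \<in> exps (exp_vars n i). \<forall>j\<in>S. Poly_Mapping.lookup a j \<le> dlt i j u}"

lemma Fa_upcl: "upcl (exp_vars n i) (Fa n i a S)"
  unfolding upcl_def Fa_def by (auto simp: exps_add dlt_add intro: le_add1 trans_le_add1)

lemma psum_Dj_Fa:
  assumes j: "j \<in> {1..n}" and jS: "j \<notin> S"
  shows "psum (Dj n i j (Poly_Mapping.lookup a j)) (Fa n i a S) = Fa n i a (insert j S)"
proof
  show "psum (Dj n i j (Poly_Mapping.lookup a j)) (Fa n i a S) \<subseteq> Fa n i a (insert j S)"
    unfolding psum_def Dj_def Fa_def by (auto simp: exps_add dlt_add intro: trans_le_add1 trans_le_add2)
  show "Fa n i a (insert j S) \<subseteq> psum (Dj n i j (Poly_Mapping.lookup a j)) (Fa n i a S)"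
  proof
    fix u assume u: "u \<in> Fa n i a (insert j S)"
    let ?V = "exp_vars n i"
    have ue: "u \<in> exps ?V" using u unfolding Fa_def by blast
    define x where "x = pmk ?V (\<lambda>q. if fst q = j then Poly_Mapping.lookup u q else 0)"
    have lx: "Poly_Mapping.lookup x q = (if q \<in> ?V \<and> fst q = j then Poly_Mapping.lookup u q else 0)" for q
      unfolding x_def by (simp add: lookup_pmk finite_exp_vars)
    have xe: "x \<in> exps ?V" unfolding x_def by (rule pmk_exps[OF finite_exp_vars])
    have le: "\<forall>q. Poly_Mapping.lookup x q \<le> Poly_Mapping.lookup u q" by (simp add: lx)
    have eq: "u = x + (u - x)" using le_split[OF le] .
    have dxj: "dlt i j x = dlt i j u"
      unfolding dlt_def by (rule sum.cong) (use j in \<open>auto simp: lx mem_exp_vars\<close>)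
    have dx0: "dlt i j' x = 0" if "j' \<noteq> j" for j'
      unfolding dlt_def using that by (simp add: lx)
    have dsplit: "dlt i j' u = dlt i j' x + dlt i j' (u - x)" for j'
      by (subst eq) (simp only: dlt_add[symmetric] eq[symmetric])
    have "x \<in> Dj n i j (Poly_Mapping.lookup a j)" unfolding Dj_def using xe dxj u unfolding Fa_def by auto
    moreover have "u - x \<in> Fa n i a S"
    proof -
      have "Poly_Mapping.lookup a j' \<le> dlt i j' (u - x)" if j': "j' \<in> S" for j'
      proof -
        have "j' \<noteq> j" using j' jS by blast
        then have "dlt i j' u = dlt i j' (u - x)" using dsplit[of j'] dx0[of j'] by simp
        moreover have "Poly_Mapping.lookup a j' \<le> dlt i j' u" using u j' unfolding Fa_def by blast
        ultimately show ?thesis by simp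
      qed
      then show ?thesis using minus_exps[OF ue] unfolding Fa_def by blast
    qed
    ultimately show "u \<in> psum (Dj n i j (Poly_Mapping.lookup a j)) (Fa n i a S)" using eq unfolding psum_def by blast
  qed
qed

lemma exp_term_foldr:
  assumes "distinct L" "set L \<subseteq> {1..n}"
  shows "foldr (\<lambda>j J. ideal_prod (exp_vars n i)
       (ideal_pow (exp_vars n i) (exp_prime n i j) (Poly_Mapping.lookup a j)) J) L (polys (exp_vars n i))
    = (MI (exp_vars n i) (Fa n i a (set L)) :: (nat \<times> nat, 'k::field) mpoly set)"
  using assms
proof (induction L)
  case Nil
  have "Fa n i a {} = exps (exp_vars n i)" unfolding Fa_def by simp
  then show ?case by (simp add: MI_exps)
next
  case (Cons j L)
  have j: "j \<in> {1..n}" and jL: "j \<notin> set L" using Cons.prems by auto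
  have "ideal_pow (exp_vars n i) (exp_prime n i j :: (nat \<times> nat, 'k) mpoly set) (Poly_Mapping.lookup a j)
      = MI (exp_vars n i) (Dj n i j (Poly_Mapping.lookup a j))"
    unfolding exp_prime_MI[OF j] ideal_pow_MI[OF Dj_upcl] powE_Dj ..
  let ?V = "exp_vars n i"
  let ?f = "\<lambda>j J. ideal_prod ?V (ideal_pow ?V (exp_prime n i j :: (nat \<times> nat, 'k) mpoly set) (Poly_Mapping.lookup a j)) J"
  have IH: "foldr ?f L (polys ?V) = MI ?V (Fa n i a (set L))" using Cons by simp
  have "foldr ?f (j # L) (polys ?V) = ?f j (foldr ?f L (polys ?V))" by simp
  also have "\<dots> = ideal_prod ?V (MI ?V (Dj n i j (Poly_Mapping.lookup a j))) (MI ?V (Fa n i a (set L)))"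
    using IH \<open>ideal_pow _ _ _ = _\<close> by simp
  also have "\<dots> = MI ?V (psum (Dj n i j (Poly_Mapping.lookup a j)) (Fa n i a (set L)))"
    by (rule ideal_prod_MI[OF Dj_upcl Fa_upcl])
  also have "\<dots> = MI ?V (Fa n i a (set (j # L)))" using psum_Dj_Fa[OF j jL] by simp
  finally show ?case .
qed

lemma exp_term_MI:
  "(exp_term n i a :: (nat \<times> nat, 'k::field) mpoly set) = MI (exp_vars n i) (Fa n i a {1..n})"
proof -
  have "(exp_term n i a :: (nat \<times> nat, 'k::field) mpoly set) = MI (exp_vars n i) (Fa n i a (set [1..<Suc n]))"
    unfolding exp_term_def by (rule exp_term_foldr) auto
  also have "set [1..<Suc n] = {1..n}" by auto
  finally show ?thesis .
qed

lemma gen_union: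
  assumes u: "\<forall>a\<in>X. upcl V (G a)"
  shows "ideal_gen V (\<Union>a\<in>X. (MI V (G a) :: ('v,'k::field) mpoly set)) = MI V (\<Union>a\<in>X. G a)"
proof (rule gen_MI)
  show "upcl V (\<Union>a\<in>X. G a)" using u unfolding upcl_def by blast
  show "(\<Union>a\<in>X. (MI V (G a) :: ('v,'k) mpoly set)) \<subseteq> MI V (\<Union>a\<in>X. G a)" unfolding MI_def by blast
  show "\<forall>b\<in>\<Union>a\<in>X. G a. monom b \<in> ideal_gen V (\<Union>a\<in>X. (MI V (G a) :: ('v,'k) mpoly set))"
  proof
    fix b assume "b \<in> (\<Union>a\<in>X. G a)"
    then obtain a where a: "a \<in> X" "b \<in> G a" by blast
    then have "b \<in> exps V" using u unfolding upcl_def by blast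
    then have "(monom b :: ('v,'k) mpoly) \<in> MI V (G a)" using a by (simp add: monom_MI)
    then have "(monom b :: ('v,'k) mpoly) \<in> (\<Union>a\<in>X. MI V (G a))" using a by blast
    then show "monom b \<in> ideal_gen V (\<Union>a\<in>X. (MI V (G a) :: ('v,'k) mpoly set))" by (rule subsetD[OF ideal_gen_sup])
  qed
qed

lemma expansion_MI:
  assumes m: "monomial_ideal {1..n} (I :: (nat,'k::field) mpoly set)"
  shows "(expansion n i I :: (nat \<times> nat, 'k) mpoly set) = MI (exp_vars n i) (preD n i (expI {1..n} I))"
proof -
  let ?V = "{1..n::nat}"
  have uE: "upcl ?V (expI ?V I)" using monomial_MI[OF m] by blast
  have "(expansion n i I :: (nat \<times> nat, 'k) mpoly set) = ideal_gen (exp_vars n i) (\<Union>a\<in>mingens ?V I. MI (exp_vars n i) (Fa n i a ?V))"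
    unfolding expansion_def exp_term_MI ..
  also have "\<dots> = MI (exp_vars n i) (\<Union>a\<in>mingens ?V I. Fa n i a ?V)"
    by (rule gen_union) (simp add: Fa_upcl)
  also have "(\<Union>a\<in>mingens ?V I. Fa n i a ?V) = preD n i (expI ?V I)"
  proof
    show "(\<Union>a\<in>mingens ?V I. Fa n i a ?V) \<subseteq> preD n i (expI ?V I)"
    proof
      fix u assume "u \<in> (\<Union>a\<in>mingens ?V I. Fa n i a ?V)"
      then obtain a where a: "a \<in> mingens ?V I" and u: "u \<in> Fa n i a ?V" by blast
      have aE: "a \<in> expI ?V I" using a mingens_expI by blast
      have ae: "a \<in> exps ?V" using aE unfolding expI_def by blast
      have "\<forall>j. Poly_Mapping.lookup a j \<le> Poly_Mapping.lookup (dl n i u) j"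
      proof
        fix j show "Poly_Mapping.lookup a j \<le> Poly_Mapping.lookup (dl n i u) j"
          using u exps_lookup[OF ae, of j] unfolding Fa_def by (auto simp: lookup_dl)
      qed
      then have "dl n i u \<in> expI ?V I" using upcl_le[OF uE aE dl_exps] by blast
      then show "u \<in> preD n i (expI ?V I)" using u unfolding preD_def Fa_def by blast
    qed
    show "preD n i (expI ?V I) \<subseteq> (\<Union>a\<in>mingens ?V I. Fa n i a ?V)"
    proof
      fix u assume u: "u \<in> preD n i (expI ?V I)"
      then obtain g where g: "g \<in> mingens ?V I" and le: "\<forall>v. Poly_Mapping.lookup g v \<le> Poly_Mapping.lookup (dl n i u) v"
        using mingens_below[OF m] unfolding preD_def by blast
      have "u \<in> Fa n i g ?V" using u le unfolding preD_def Fa_def by (auto simp: lookup_dl) (metis)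
      then show "u \<in> (\<Union>a\<in>mingens ?V I. Fa n i a ?V)" using g by blast
    qed
  qed
  finally show ?thesis .
qed

lemma dl_le_split:
  assumes u: "u \<in> exps (exp_vars n i)"
  shows "e \<in> exps {1..n} \<Longrightarrow> (\<forall>j. Poly_Mapping.lookup e j \<le> Poly_Mapping.lookup (dl n i u) j) \<Longrightarrow>
    \<exists>u1\<in>exps (exp_vars n i). (\<forall>q. Poly_Mapping.lookup u1 q \<le> Poly_Mapping.lookup u q) \<and> dl n i u1 = e"
proof (induction "dg e" arbitrary: e rule: less_induct)
  case less
  show ?case
  proof (cases "e = 0")
    case True
    then show ?thesis by (intro bexI[of _ 0]) (simp_all add: dl_zero)
  next
    case False
    then obtain j where j: "j \<in> Poly_Mapping.keys e" by (metis keys_eq_empty ex_in_conv)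
    have jV: "j \<in> {1..n}" using j less.prems(1) unfolding exps_def by blast
    define e' where "e' = e - Poly_Mapping.single j 1"
    have ej: "Poly_Mapping.lookup e j \<ge> 1" using j by (simp add: in_keys_iff)
    have ee: "e = e' + Poly_Mapping.single j 1"
      unfolding e'_def by (rule poly_mapping_eqI) (use ej in \<open>auto simp: lookup_add lookup_minus lookup_single when_def\<close>)
    have le: "\<forall>v. Poly_Mapping.lookup e' v \<le> Poly_Mapping.lookup e v" unfolding e'_def by (simp add: lookup_minus)
    have ne: "e' \<noteq> e" using ee by (metis add_cancel_left_right single_zero one_neq_zero inj_single inj_eq)
    have e'e: "e' \<in> exps {1..n}" using minus_exps[OF less.prems(1)] unfolding e'_def .
    have "\<forall>v. Poly_Mapping.lookup e' v \<le> Poly_Mapping.lookup (dl n i u) v" using le less.prems(2) order_trans by blast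
    then obtain u1 where u1: "u1 \<in> exps (exp_vars n i)" "\<forall>q. Poly_Mapping.lookup u1 q \<le> Poly_Mapping.lookup u q"
      and du1: "dl n i u1 = e'"
      using less.hyps[OF dg_less[OF le ne] e'e] by blast
    have us: "u = u1 + (u - u1)" using le_split[OF u1(2)] .
    have "dlt i j u = dlt i j u1 + dlt i j (u - u1)" by (subst us) (simp only: dlt_add[symmetric] us[symmetric])
    moreover have "dlt i j u1 = Poly_Mapping.lookup e' j" using du1 jV lookup_dl[of n i u1 j] by simp
    moreover have "Poly_Mapping.lookup e j \<le> dlt i j u" using less.prems(2) jV lookup_dl[of n i u j] by (metis)
    moreover have "Poly_Mapping.lookup e j = Poly_Mapping.lookup e' j + 1" using ee by (simp add: lookup_add)
    ultimately have "0 < dlt i j (u - u1)" by linarith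
    then obtain k where k: "k \<in> {1..i j}" "0 < Poly_Mapping.lookup (u - u1) (j, k)" using dlt_pos by blast
    have jk: "(j, k) \<in> exp_vars n i" using jV k by (simp add: mem_exp_vars)
    let ?u1 = "u1 + Poly_Mapping.single (j, k) 1"
    have "?u1 \<in> exps (exp_vars n i)" using exps_add[OF u1(1) var_exps[OF jk]] .
    moreover have "\<forall>q. Poly_Mapping.lookup ?u1 q \<le> Poly_Mapping.lookup u q"
      using u1(2) k(2) by (auto simp: lookup_add lookup_single when_def lookup_minus)
    moreover have "dl n i ?u1 = e" using ee du1 dl_single[OF jk] by (simp add: dl_add)
    ultimately show ?thesis by blast
  qed
qed

lemma preD_psum:
  assumes E: "upcl {1..n} E" and F: "upcl {1..n} F"
  shows "psum (preD n i E) (preD n i F) = preD n i (psum E F)"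
proof
  show "psum (preD n i E) (preD n i F) \<subseteq> preD n i (psum E F)"
  proof
    fix x assume "x \<in> psum (preD n i E) (preD n i F)"
    then obtain a b where x: "x = a + b" and a: "a \<in> preD n i E" and b: "b \<in> preD n i F"
      unfolding psum_def by blast
    have "x \<in> exps (exp_vars n i)" using a b x exps_add[of a "exp_vars n i" b] unfolding preD_def by blast
    moreover have "dl n i x \<in> psum E F" using a b x unfolding preD_def psum_def by (auto simp: dl_add)
    ultimately show "x \<in> preD n i (psum E F)" unfolding preD_def by blast
  qed
  show "preD n i (psum E F) \<subseteq> psum (preD n i E) (preD n i F)"
  proof
    fix u assume u: "u \<in> preD n i (psum E F)"
    then obtain e f where ef: "dl n i u = e + f" "e \<in> E" "f \<in> F" and ue: "u \<in> exps (exp_vars n i)"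
      unfolding preD_def psum_def by blast
    have ee: "e \<in> exps {1..n}" using ef E unfolding upcl_def by blast
    have "\<forall>j. Poly_Mapping.lookup e j \<le> Poly_Mapping.lookup (dl n i u) j" using ef by (simp add: lookup_add)
    then obtain u1 where u1: "u1 \<in> exps (exp_vars n i)" "\<forall>q. Poly_Mapping.lookup u1 q \<le> Poly_Mapping.lookup u q"
      and du1: "dl n i u1 = e" using dl_le_split[OF ue ee] by blast
    have us: "u = u1 + (u - u1)" using le_split[OF u1(2)] .
    have "dl n i u = dl n i (u1 + (u - u1))" using us by (rule arg_cong)
    also have "\<dots> = e + dl n i (u - u1)" by (simp only: dl_add du1)
    finally have "dl n i u = e + dl n i (u - u1)" .
    then have "dl n i (u - u1) = f" using ef by simp
    then have "u - u1 \<in> preD n i F" using ef minus_exps[OF ue] unfolding preD_def by simp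
    moreover have "u1 \<in> preD n i E" using u1 du1 ef unfolding preD_def by simp
    ultimately show "u \<in> psum (preD n i E) (preD n i F)" using us unfolding psum_def by blast
  qed
qed

lemma preD_powE:
  assumes E: "upcl {1..n} E"
  shows "powE (exp_vars n i) (preD n i E) m = preD n i (powE {1..n} E m)"
proof (induction m)
  case 0 then show ?case using preD_exps[of n i] by simp
next
  case (Suc m) then show ?case using preD_psum[OF E powE_upcl[OF E]] by simp
qed

lemma ex_single_pos: "(\<exists>q\<in>B. 0 < Poly_Mapping.lookup (Poly_Mapping.single p (c::nat)) q) \<longleftrightarrow> 0 < c \<and> p \<in> B"
  by (auto simp: lookup_single when_def)

lemma assp_preD:
  assumes E: "upcl {1..n} E" and i: "\<forall>j\<in>{1..n}. 0 < i j"
  shows "assp (exp_vars n i) (preD n i E) B \<longleftrightarrow> (\<exists>A. B = blk n i A \<and> assp {1..n} E A)"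
proof
  let ?V = "{1..n::nat}" and ?V' = "exp_vars n i"
  assume "assp ?V' (preD n i E) B"
  then obtain u where BV: "B \<subseteq> ?V'" and u: "u \<in> exps ?V'"
    and pat: "\<forall>b\<in>exps ?V'. (u + b \<in> preD n i E \<longleftrightarrow> (\<exists>q\<in>B. 0 < Poly_Mapping.lookup b q))"
    unfolding assp_def by blast
  define A where "A = {j \<in> ?V. (j, 1) \<in> B}"
  let ?c = "dl n i u"
  have pat2: "\<forall>b\<in>exps ?V. (?c + b \<in> E \<longleftrightarrow> (\<exists>j\<in>A. 0 < Poly_Mapping.lookup b j))"
  proof
    fix b assume b: "b \<in> exps ?V"
    have Le: "Lf n i b \<in> exps ?V'" by (rule Lf_exps)
    have "u + Lf n i b \<in> preD n i E \<longleftrightarrow> ?c + b \<in> E"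
      using exps_add[OF u Le] dl_Lf[OF b i] unfolding preD_def by (simp add: dl_add)
    moreover have "(\<exists>q\<in>B. 0 < Poly_Mapping.lookup (Lf n i b) q) \<longleftrightarrow> (\<exists>j\<in>A. 0 < Poly_Mapping.lookup b j)"
    proof
      assume "\<exists>q\<in>B. 0 < Poly_Mapping.lookup (Lf n i b) q"
      then obtain q where q: "q \<in> B" "q \<in> ?V'" "snd q = 1" "0 < Poly_Mapping.lookup b (fst q)"
        unfolding Lf_pos by blast
      then have "fst q \<in> A" unfolding A_def by (cases q) (auto simp: mem_exp_vars)
      then show "\<exists>j\<in>A. 0 < Poly_Mapping.lookup b j" using q by blast
    next
      assume "\<exists>j\<in>A. 0 < Poly_Mapping.lookup b j"
      then obtain j where j: "j \<in> ?V" "(j, 1) \<in> B" "0 < Poly_Mapping.lookup b j" unfolding A_def by blast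
      then have "0 < Poly_Mapping.lookup (Lf n i b) (j, 1)" using BV unfolding Lf_pos by auto
      then show "\<exists>q\<in>B. 0 < Poly_Mapping.lookup (Lf n i b) q" using j by blast
    qed
    ultimately show "?c + b \<in> E \<longleftrightarrow> (\<exists>j\<in>A. 0 < Poly_Mapping.lookup b j)" using pat Le by blast
  qed
  have "B = blk n i A"
  proof
    show "B \<subseteq> blk n i A"
    proof
      fix q assume q: "q \<in> B"
      obtain j k where qjk: "q = (j, k)" by (cases q)
      have jk: "(j, k) \<in> ?V'" using q qjk BV by blast
      then have j: "j \<in> ?V" and k: "k \<in> {1..i j}" by (simp_all add: mem_exp_vars)
      have j1: "(j, 1) \<in> ?V'" using j i by (simp add: mem_exp_vars Suc_leI)
      have "u + Poly_Mapping.single (j, k) 1 \<in> preD n i E \<longleftrightarrow> (j, k) \<in> B"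
        using pat var_exps[OF jk] ex_single_pos[of B "(j, k)" 1] by simp
      moreover have "u + Poly_Mapping.single (j, 1) 1 \<in> preD n i E \<longleftrightarrow> (j, 1) \<in> B"
        using pat var_exps[OF j1] ex_single_pos[of B "(j, 1)" 1] by simp
      moreover have "u + Poly_Mapping.single (j, k) 1 \<in> preD n i E \<longleftrightarrow> u + Poly_Mapping.single (j, 1) 1 \<in> preD n i E"
        using exps_add[OF u var_exps[OF jk]] exps_add[OF u var_exps[OF j1]] dl_single[OF jk] dl_single[OF j1]
        unfolding preD_def by (simp add: dl_add)
      ultimately have "(j, 1) \<in> B" using q qjk by blast
      then show "q \<in> blk n i A" unfolding blk_def A_def using qjk jk j by simp
    qed
    show "blk n i A \<subseteq> B"
    proof
      fix q assume q: "q \<in> blk n i A"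
      obtain j k where qjk: "q = (j, k)" by (cases q)
      have jk: "(j, k) \<in> ?V'" and jA: "j \<in> A" using q qjk unfolding blk_def by auto
      then have j: "j \<in> ?V" by (simp add: mem_exp_vars)
      have j1: "(j, 1) \<in> ?V'" using j i by (simp add: mem_exp_vars Suc_leI)
      have "u + Poly_Mapping.single (j, k) 1 \<in> preD n i E \<longleftrightarrow> (j, k) \<in> B"
        using pat var_exps[OF jk] ex_single_pos[of B "(j, k)" 1] by simp
      moreover have "u + Poly_Mapping.single (j, 1) 1 \<in> preD n i E \<longleftrightarrow> (j, 1) \<in> B"
        using pat var_exps[OF j1] ex_single_pos[of B "(j, 1)" 1] by simp
      moreover have "u + Poly_Mapping.single (j, k) 1 \<in> preD n i E \<longleftrightarrow> u + Poly_Mapping.single (j, 1) 1 \<in> preD n i E"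
        using exps_add[OF u var_exps[OF jk]] exps_add[OF u var_exps[OF j1]] dl_single[OF jk] dl_single[OF j1]
        unfolding preD_def by (simp add: dl_add)
      moreover have "(j, 1) \<in> B" using jA unfolding A_def by blast
      ultimately show "q \<in> B" using qjk by blast
    qed
  qed
  moreover have "assp ?V E A" unfolding assp_def using pat2 dl_exps[of n i u] unfolding A_def by blast
  ultimately show "\<exists>A. B = blk n i A \<and> assp ?V E A" by blast
next
  let ?V = "{1..n::nat}" and ?V' = "exp_vars n i"
  assume "\<exists>A. B = blk n i A \<and> assp ?V E A"
  then obtain A c where B: "B = blk n i A" and AV: "A \<subseteq> ?V" and c: "c \<in> exps ?V"
    and pat: "\<forall>b\<in>exps ?V. (c + b \<in> E \<longleftrightarrow> (\<exists>j\<in>A. 0 < Poly_Mapping.lookup b j))"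
    unfolding assp_def by blast
  have "\<forall>b\<in>exps ?V'. (Lf n i c + b \<in> preD n i E \<longleftrightarrow> (\<exists>q\<in>B. 0 < Poly_Mapping.lookup b q))"
  proof
    fix b assume b: "b \<in> exps ?V'"
    have "Lf n i c + b \<in> preD n i E \<longleftrightarrow> c + dl n i b \<in> E"
      using exps_add[OF Lf_exps b] dl_Lf[OF c i] unfolding preD_def by (simp add: dl_add)
    also have "\<dots> \<longleftrightarrow> (\<exists>j\<in>A. 0 < Poly_Mapping.lookup (dl n i b) j)" using pat dl_exps by blast
    also have "\<dots> \<longleftrightarrow> (\<exists>q\<in>B. 0 < Poly_Mapping.lookup b q)"
    proof
      assume "\<exists>j\<in>A. 0 < Poly_Mapping.lookup (dl n i b) j"
      then obtain j where j: "j \<in> A" "0 < dlt i j b" using AV by (auto simp: lookup_dl split: if_splits)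
      then obtain k where k: "k \<in> {1..i j}" "0 < Poly_Mapping.lookup b (j, k)" using dlt_pos by blast
      have "(j, k) \<in> B" unfolding B blk_def using j k AV by (auto simp: mem_exp_vars)
      then show "\<exists>q\<in>B. 0 < Poly_Mapping.lookup b q" using k by blast
    next
      assume "\<exists>q\<in>B. 0 < Poly_Mapping.lookup b q"
      then obtain j k where jk: "(j, k) \<in> B" "0 < Poly_Mapping.lookup b (j, k)" by auto
      then have j: "j \<in> A" "j \<in> ?V" "k \<in> {1..i j}" unfolding B blk_def by (auto simp: mem_exp_vars)
      then have "0 < dlt i j b" using jk dlt_pos by blast
      then show "\<exists>j\<in>A. 0 < Poly_Mapping.lookup (dl n i b) j" using j by (auto simp: lookup_dl)
    qed
    finally show "Lf n i c + b \<in> preD n i E \<longleftrightarrow> (\<exists>q\<in>B. 0 < Poly_Mapping.lookup b q)" .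
  qed
  moreover have "B \<subseteq> ?V'" unfolding B blk_def by blast
  ultimately show "assp ?V' (preD n i E) B" unfolding assp_def using Lf_exps by blast
qed

lemma blk_inj:
  assumes i: "\<forall>j\<in>{1..n}. 0 < i j" and A: "A \<subseteq> {1..n}" and A': "A' \<subseteq> {1..n}"
    and eq: "blk n i A = blk n i A'"
  shows "A = A'"
proof -
  have key: "j \<in> X \<longleftrightarrow> (j, 1) \<in> blk n i X" if "j \<in> {1..n}" for j X
    using that i unfolding blk_def by (auto simp: mem_exp_vars Suc_leI)
  show ?thesis
  proof (rule set_eqI)
    fix j show "j \<in> A \<longleftrightarrow> j \<in> A'"
    proof (cases "j \<in> {1..n}")
      case True
      then show ?thesis using key[OF True, of A] key[OF True, of A'] eq by simp
    next
      case False
      then show ?thesis using A A' by blast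
    qed
  qed
qed

definition NCS :: "(nat \<Rightarrow> 'a set set) \<Rightarrow> bool" where
  "NCS S \<longleftrightarrow> (\<exists>s::nat. 0 < s \<and> (\<exists>A0. (\<forall>m. 1 \<le> m \<and> m \<le> s \<longrightarrow> S (Suc m) \<subseteq> S m \<union> {A0}) \<and>
      (\<forall>m. s + 1 \<le> m \<longrightarrow> S (Suc m) \<subseteq> S m)))"

lemma nc_char:
  fixes \<Psi> :: "'a set \<Rightarrow> ('v, 'k::field) mpoly set" and J pz :: "('v, 'k) mpoly set"
  assumes inj: "\<forall>A B. A \<subseteq> U \<longrightarrow> B \<subseteq> U \<longrightarrow> \<Psi> A = \<Psi> B \<longrightarrow> A = B"
    and Sm: "\<forall>m. S m \<subseteq> Pow U"
    and good: "\<forall>A. A \<subseteq> U \<longrightarrow> prime_ideal W (\<Psi> A) \<and> monomial_ideal W (\<Psi> A)"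
    and pz: "prime_ideal W pz" "monomial_ideal W pz"
    and AssEq: "\<forall>m. Ass W (ideal_pow W J m) = \<Psi> ` S m"
  shows "nearly_copersistent W J \<longleftrightarrow> NCS S"
proof
  have mem: "A \<in> S m" if AU: "A \<subseteq> U" and AP: "\<Psi> A \<in> \<Psi> ` S m" for A m
  proof -
    obtain B where B: "B \<in> S m" "\<Psi> A = \<Psi> B" using AP by blast
    have "B \<subseteq> U" using B(1) Sm by blast
    then have "A = B" using inj AU B(2) by blast
    then show ?thesis using B(1) by simp
  qed
  assume "nearly_copersistent W J"
  then obtain s p where s: "0 < s"
    and c1: "\<forall>m. 1 \<le> m \<and> m \<le> s \<longrightarrow> Ass W (ideal_pow W J (Suc m)) \<subseteq> Ass W (ideal_pow W J m) \<union> {p}"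
    and c2: "\<forall>m. s + 1 \<le> m \<longrightarrow> Ass W (ideal_pow W J (Suc m)) \<subseteq> Ass W (ideal_pow W J m)"
    unfolding nearly_copersistent_def by blast
  have d2: "\<forall>m. s + 1 \<le> m \<longrightarrow> S (Suc m) \<subseteq> S m"
  proof (intro allI impI subsetI)
    fix m A assume m: "s + 1 \<le> m" and A: "A \<in> S (Suc m)"
    have AU: "A \<subseteq> U" using A Sm by blast
    have "\<Psi> A \<in> \<Psi> ` S m" using c2 m A AssEq by blast
    then show "A \<in> S m" using mem[OF AU] by blast
  qed
  show "NCS S"
  proof (cases "\<exists>A0. A0 \<subseteq> U \<and> \<Psi> A0 = p")
    case True
    then obtain A0 where A0: "A0 \<subseteq> U" "\<Psi> A0 = p" by blast
    have "\<forall>m. 1 \<le> m \<and> m \<le> s \<longrightarrow> S (Suc m) \<subseteq> S m \<union> {A0}"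
    proof (intro allI impI subsetI)
      fix m A assume m: "1 \<le> m \<and> m \<le> s" and A: "A \<in> S (Suc m)"
      have AU: "A \<subseteq> U" using A Sm by blast
      have "\<Psi> A \<in> \<Psi> ` S m \<union> {p}" using c1 m A AssEq by blast
      then show "A \<in> S m \<union> {A0}"
      proof
        assume "\<Psi> A \<in> \<Psi> ` S m" then show ?thesis using mem[OF AU] by blast
      next
        assume "\<Psi> A \<in> {p}" then have "A = A0" using inj AU A0 by auto
        then show ?thesis by blast
      qed
    qed
    then show ?thesis unfolding NCS_def using s d2 by blast
  next
    case False
    have "\<forall>m. 1 \<le> m \<and> m \<le> s \<longrightarrow> S (Suc m) \<subseteq> S m \<union> {{}}"
    proof (intro allI impI subsetI)
      fix m A assume m: "1 \<le> m \<and> m \<le> s" and A: "A \<in> S (Suc m)"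
      have AU: "A \<subseteq> U" using A Sm by blast
      have "\<Psi> A \<in> \<Psi> ` S m \<union> {p}" using c1 m A AssEq by blast
      moreover have "\<Psi> A \<noteq> p" using False AU by blast
      ultimately show "A \<in> S m \<union> {{}}" using mem[OF AU] by blast
    qed
    then show ?thesis unfolding NCS_def using s d2 by blast
  qed
next
  assume "NCS S"
  then obtain s A0 where s: "0 < s"
    and c1: "\<forall>m. 1 \<le> m \<and> m \<le> s \<longrightarrow> S (Suc m) \<subseteq> S m \<union> {A0}"
    and c2: "\<forall>m. s + 1 \<le> m \<longrightarrow> S (Suc m) \<subseteq> S m"
    unfolding NCS_def by blast
  define p where "p = (if A0 \<subseteq> U then \<Psi> A0 else pz)"
  have pg: "prime_ideal W p \<and> monomial_ideal W p" unfolding p_def using good pz by auto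
  have e1: "\<forall>m. 1 \<le> m \<and> m \<le> s \<longrightarrow> Ass W (ideal_pow W J (Suc m)) \<subseteq> Ass W (ideal_pow W J m) \<union> {p}"
  proof (intro allI impI subsetI)
    fix m P assume m: "1 \<le> m \<and> m \<le> s" and P: "P \<in> Ass W (ideal_pow W J (Suc m))"
    then obtain A where A: "A \<in> S (Suc m)" "P = \<Psi> A" using AssEq by blast
    have "A \<in> S m \<or> A = A0" using c1 m A(1) by blast
    then show "P \<in> Ass W (ideal_pow W J m) \<union> {p}"
    proof
      assume "A \<in> S m" then show ?thesis using A(2) AssEq by blast
    next
      assume "A = A0"
      moreover have "A \<subseteq> U" using A(1) Sm by blast
      ultimately have "p = P" unfolding p_def using A(2) by simp
      then show ?thesis by blast
    qed
  qed
  have e2: "\<forall>m. s + 1 \<le> m \<longrightarrow> Ass W (ideal_pow W J (Suc m)) \<subseteq> Ass W (ideal_pow W J m)"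
  proof (intro allI impI subsetI)
    fix m P assume m: "s + 1 \<le> m" and P: "P \<in> Ass W (ideal_pow W J (Suc m))"
    then obtain A where A: "A \<in> S (Suc m)" "P = \<Psi> A" using AssEq by blast
    have "A \<in> S m" using c2 m A(1) by blast
    then show "P \<in> Ass W (ideal_pow W J m)" using A(2) AssEq by blast
  qed
  show "nearly_copersistent W J" unfolding nearly_copersistent_def using s pg e1 e2 by blast
qed

lemma preD_upcl:
  assumes E: "upcl {1..n} E" shows "upcl (exp_vars n i) (preD n i E)"
  unfolding upcl_def
proof (intro conjI ballI)
  show "preD n i E \<subseteq> exps (exp_vars n i)" unfolding preD_def by blast
  fix a c assume a: "a \<in> preD n i E" and c: "c \<in> exps (exp_vars n i)"
  have "dl n i a + dl n i c \<in> E" using a E dl_exps[of n i c] unfolding preD_def upcl_def by blast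
  then show "a + c \<in> preD n i E" using a c exps_add[of a "exp_vars n i" c] unfolding preD_def by (simp add: dl_add)
qed

lemma assp_sub: "assp V E A \<Longrightarrow> A \<subseteq> V"
  unfolding assp_def by blast

theorem lemma4p11:
  fixes I :: "(nat, 'k::field) mpoly set" and n :: nat
  assumes "monomial_ideal {1..n} I"
  shows "(\<forall>i::nat \<Rightarrow> nat. (\<forall>j\<in>{1..n}. 0 < i j) \<longrightarrow>
            (nearly_copersistent {1..n} I \<longleftrightarrow> nearly_copersistent (exp_vars n i) (expansion n i I)))
       \<and> (\<forall>w::nat \<Rightarrow> nat. (\<forall>j\<in>{1..n}. 0 < w j) \<longrightarrow>
            (nearly_copersistent {1..n} I \<longleftrightarrow> nearly_copersistent {1..n} (weighting n w I)))"
proof -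
  let ?V = "{1..n::nat}"
  define E where "E = expI ?V I"
  have uE: "upcl ?V E" and IE: "I = MI ?V E" using monomial_MI[OF assms] unfolding E_def by blast+
  define S where "S m = {A. assp ?V (powE ?V E m) A}" for m
  have Sm: "\<forall>m. S m \<subseteq> Pow ?V" unfolding S_def using assp_sub by blast
  have AssI: "\<forall>m. Ass ?V (ideal_pow ?V I m) = PA ?V ` S m"
  proof
    fix m
    show "Ass ?V (ideal_pow ?V I m) = PA ?V ` S m"
      unfolding IE ideal_pow_MI[OF uE] Ass_MI[OF powE_upcl[OF uE]] S_def ..
  qed
  have ncI: "nearly_copersistent ?V I \<longleftrightarrow> NCS S"
  proof (rule nc_char[where \<Psi> = "PA ?V" and U = ?V and pz = "PA ?V {}"])
    show "\<forall>A B. A \<subseteq> ?V \<longrightarrow> B \<subseteq> ?V \<longrightarrow> (PA ?V A :: (nat,'k) mpoly set) = PA ?V B \<longrightarrow> A = B"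
      using PA_inj by blast
    show "\<forall>m. S m \<subseteq> Pow ?V" by (rule Sm)
    show "\<forall>A. A \<subseteq> ?V \<longrightarrow> prime_ideal ?V (PA ?V A :: (nat,'k) mpoly set) \<and> monomial_ideal ?V (PA ?V A :: (nat,'k) mpoly set)"
      using PA_prime PA_monomial by blast
    show "prime_ideal ?V (PA ?V {} :: (nat,'k) mpoly set)" by (rule PA_prime)
    show "monomial_ideal ?V (PA ?V {} :: (nat,'k) mpoly set)" by (rule PA_monomial)
    show "\<forall>m. Ass ?V (ideal_pow ?V I m) = PA ?V ` S m" by (rule AssI)
  qed
  have part1: "nearly_copersistent ?V I \<longleftrightarrow> nearly_copersistent (exp_vars n i) (expansion n i I)"
    if i: "\<forall>j\<in>?V. 0 < i j" for i
  proof -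
    let ?V' = "exp_vars n i"
    let ?\<Psi> = "\<lambda>A. PA ?V' (blk n i A) :: (nat \<times> nat, 'k) mpoly set"
    have Iexp: "(expansion n i I :: (nat \<times> nat, 'k) mpoly set) = MI ?V' (preD n i E)"
      unfolding E_def by (rule expansion_MI[OF assms])
    have AssX: "\<forall>m. Ass ?V' (ideal_pow ?V' (expansion n i I) m) = ?\<Psi> ` S m"
    proof
      fix m
      have "Ass ?V' (ideal_pow ?V' (expansion n i I) m) = PA ?V' ` {B. assp ?V' (preD n i (powE ?V E m)) B}"
        unfolding Iexp ideal_pow_MI[OF preD_upcl[OF uE]] Ass_MI[OF powE_upcl[OF preD_upcl[OF uE]]] unfolding preD_powE[OF uE] ..
      also have "{B. assp ?V' (preD n i (powE ?V E m)) B} = blk n i ` S m"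
        unfolding S_def using assp_preD[OF powE_upcl[OF uE] i] by blast
      finally show "Ass ?V' (ideal_pow ?V' (expansion n i I) m) = ?\<Psi> ` S m" by (simp add: image_image)
    qed
    have ncX: "nearly_copersistent ?V' (expansion n i I) \<longleftrightarrow> NCS S"
    proof (rule nc_char[where \<Psi> = ?\<Psi> and U = ?V and pz = "PA ?V' {}"])
      show "\<forall>A B. A \<subseteq> ?V \<longrightarrow> B \<subseteq> ?V \<longrightarrow> ?\<Psi> A = ?\<Psi> B \<longrightarrow> A = B"
      proof (intro allI impI)
        fix A B assume A: "A \<subseteq> ?V" and B: "B \<subseteq> ?V" and eq: "?\<Psi> A = ?\<Psi> B"
        have "blk n i A = blk n i B"
          by (rule PA_inj[OF _ _ eq]) (auto simp: blk_def)
        then show "A = B" by (rule blk_inj[OF i A B])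
      qed
      show "\<forall>m. S m \<subseteq> Pow ?V" by (rule Sm)
      show "\<forall>A. A \<subseteq> ?V \<longrightarrow> prime_ideal ?V' (?\<Psi> A) \<and> monomial_ideal ?V' (?\<Psi> A)"
        using PA_prime PA_monomial by blast
      show "prime_ideal ?V' (PA ?V' {} :: (nat \<times> nat,'k) mpoly set)" by (rule PA_prime)
      show "monomial_ideal ?V' (PA ?V' {} :: (nat \<times> nat,'k) mpoly set)" by (rule PA_monomial)
      show "\<forall>m. Ass ?V' (ideal_pow ?V' (expansion n i I) m) = ?\<Psi> ` S m" by (rule AssX)
    qed
    show ?thesis using ncI ncX by simp
  qed
  have part2: "nearly_copersistent ?V I \<longleftrightarrow> nearly_copersistent ?V (weighting n w I)"
    if w: "\<forall>j\<in>?V. 0 < w j" for w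
  proof -
    have Iw: "weighting n w I = MI ?V (preW ?V w E)"
      unfolding E_def by (rule weighting_MI[OF assms w])
    have AssW: "\<forall>m. Ass ?V (ideal_pow ?V (weighting n w I) m) = PA ?V ` S m"
    proof
      fix m
      have "Ass ?V (ideal_pow ?V (weighting n w I) m) = PA ?V ` {A. assp ?V (preW ?V w (powE ?V E m)) A}"
        unfolding Iw ideal_pow_MI[OF preW_upcl[OF uE]] Ass_MI[OF powE_upcl[OF preW_upcl[OF uE]]] unfolding preW_powE[OF uE w] ..
      also have "{A. assp ?V (preW ?V w (powE ?V E m)) A} = S m"
        unfolding S_def using assp_preW[OF _ powE_upcl[OF uE] w] by simp
      finally show "Ass ?V (ideal_pow ?V (weighting n w I) m) = PA ?V ` S m" .
    qed
    have ncW: "nearly_copersistent ?V (weighting n w I) \<longleftrightarrow> NCS S"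
    proof (rule nc_char[where \<Psi> = "PA ?V" and U = ?V and pz = "PA ?V {}"])
      show "\<forall>A B. A \<subseteq> ?V \<longrightarrow> B \<subseteq> ?V \<longrightarrow> (PA ?V A :: (nat,'k) mpoly set) = PA ?V B \<longrightarrow> A = B"
        using PA_inj by blast
      show "\<forall>m. S m \<subseteq> Pow ?V" by (rule Sm)
      show "\<forall>A. A \<subseteq> ?V \<longrightarrow> prime_ideal ?V (PA ?V A :: (nat,'k) mpoly set) \<and> monomial_ideal ?V (PA ?V A :: (nat,'k) mpoly set)"
        using PA_prime PA_monomial by blast
      show "prime_ideal ?V (PA ?V {} :: (nat,'k) mpoly set)" by (rule PA_prime)
      show "monomial_ideal ?V (PA ?V {} :: (nat,'k) mpoly set)" by (rule PA_monomial)
      show "\<forall>m. Ass ?V (ideal_pow ?V (weighting n w I) m) = PA ?V ` S m" by (rule AssW)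
    qed
    show ?thesis using ncI ncW by simp
  qed
  show ?thesis using part1 part2 by blast
qed

end
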